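(* For any positive integer $k$, in $\mathfrak{h}^1_t[[u]]$, $$\frac{1}{1-z_ku}=\exp_{\ast_t}\left(\sum_{n=1}^\infty\frac1n d_n(t)z_{nk}u^n\right).$$ In particular, if $k\ge2$, $$1+\sum_{n=1}^\infty\zeta^t(\{k\}^n)u^n=\exp\left(\sum_{n=1}^\infty\frac1nd_n(t)\zeta(nk)u^n\right).$$
   Context: $u$ is a variable commuting with everything; $d_n(t)=t^n-(t-1)^n$; $\{k\}^n$ is $n$ repetitions of $k$. $\mathfrak{h}_t=\mathbb{Q}[t]\langle x,y\rangle$, $\mathfrak{h}^1_t=\mathbb{Q}[t]+\mathfrak{h}_ty$, $z_k=x^{k-1}y$, $\frac1{1-z_ku}=\sum_{n\ge0}z_k^nu^n$ (concatenation powers). For a word $w$, $\delta(w)=1$ if $w=1$, else $0$. The $t$-harmonic product $\ast_t$ on $\mathfrak{h}^1_t$ is the commutative, associative $\mathbb{Q}[t]$-bilinear product with $1\ast_t w=w\ast_t1=w$ and $z_kw_1\ast_t z_lw_2=z_k(w_1\ast_t z_lw_2)+z_l(z_kw_1\ast_t w_2)+(1-2t)z_{k+l}(w_1\ast_t w_2)+[1-\delta(w_1)\delta(w_2)](t^2-t)x^{k+l}(w_1\ast_t w_2)$ for words $w_1,w_2\in\mathfrak{h}^1_t$; it is extended coefficientwise to power series in $u$, and $\exp_{\ast_t}(X)=\sum_{m\ge0}X^{\ast_t m}/m!$. For $k_1\ge2$, $\zeta(k_1,\ldots,k_n)=\sum_{m_1>\cdots>m_n>0}\prod m_j^{-k_j}$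 and $\zeta^t(k_1,\ldots,k_n)=\sum_{\mathbf p}t^{n-\mathrm{dep}(\mathbf p)}\zeta(\mathbf p)$, summed over sequences $\mathbf p$ obtained from $(k_1,\ldots,k_n)$ by replacing each separating comma by a comma or a plus sign ($\mathrm{dep}$ = length). *)

theory Defs
  imports "HOL-Analysis.Analysis" "HOL-Computational_Algebra.Polynomial"
          "HOL-Computational_Algebra.Formal_Power_Series"
begin

datatype letter = X | Y

type_synonym word = "letter list"

text \<open>An element of h_t: coefficient function words -> Q[t] (finitely supported
  for all elements actually used).\<close>
type_synonym hel = "word \<Rightarrow> rat poly"

text \<open>z_k = x^(k-1) y, and the word z_{k1} ... z_{kn}\<close>
definition zw :: "nat list \<Rightarrow> word" where
  "zw ks = concat (map (\<lambda>k. replicate (k - 1) X @ [Y]) ks)"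

text \<open>inverse of zw on words of h^1 (empty or ending in y)\<close>
fun dec :: "word \<Rightarrow> nat list" where
  "dec [] = []"
| "dec (Y # w) = 1 # dec w"
| "dec (X # w) = (case dec w of [] \<Rightarrow> [] | k # r \<Rightarrow> (k + 1) # r)"

definition wmon :: "word \<Rightarrow> hel" where
  "wmon w = (\<lambda>v. if v = w then 1 else 0)"

definition lcat :: "word \<Rightarrow> hel \<Rightarrow> hel" where
  "lcat p F = (\<lambda>v. if take (length p) v = p then F (drop (length p) v) else 0)"

definition supp :: "hel \<Rightarrow> word set" where
  "supp A = {v. A v \<noteq> 0}"

fun tharm :: "nat list \<Rightarrow> nat list \<Rightarrow> hel" where
  "tharm [] w = wmon (zw w)"
| "tharm (k # w) [] = wmon (zw (k # w))"
| "tharm (k # w1) (l # w2) = (\<lambda>v.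
      lcat (zw [k]) (tharm w1 (l # w2)) v
    + lcat (zw [l]) (tharm (k # w1) w2) v
    + [:1, -2:] * lcat (zw [k + l]) (tharm w1 w2) v
    + (if w1 = [] \<and> w2 = [] then 0
       else [:0, -1, 1:] * lcat (replicate (k + l) X) (tharm w1 w2) v))"

definition hmul :: "hel \<Rightarrow> hel \<Rightarrow> hel" where
  "hmul A B = (\<lambda>v. \<Sum>a\<in>supp A. \<Sum>b\<in>supp B. A a * B b * tharm (dec a) (dec b) v)"

type_synonym hser = "nat \<Rightarrow> hel"

definition smul :: "hser \<Rightarrow> hser \<Rightarrow> hser" where
  "smul S T = (\<lambda>n v. \<Sum>i\<le>n. hmul (S i) (T (n - i)) v)"

definition sone :: hser where
  "sone = (\<lambda>n. if n = 0 then wmon [] else (\<lambda>v. 0))"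

fun spow :: "hser \<Rightarrow> nat \<Rightarrow> hser" where
  "spow S 0 = sone"
| "spow S (Suc m) = smul S (spow S m)"

text \<open>exp_{*t}(S) = sum_m S^{*m}/m!, coefficientwise in u; for S with zero
  constant term, S^{*m} only contributes to u^n with n \<ge> m.\<close>
definition texp :: "hser \<Rightarrow> hser" where
  "texp S = (\<lambda>n v. \<Sum>m\<le>n. [: inverse (fact m) :] * spow S m n v)"

definition dpoly :: "nat \<Rightarrow> rat poly" where
  "dpoly n = [:0, 1:] ^ n - [:-1, 1:] ^ n"

text \<open>1/(1 - z_k u) = sum_n z_k^n u^n\<close>
definition geomser :: "nat \<Rightarrow> hser" where
  "geomser k = (\<lambda>n. wmon (zw (replicate n k)))"

definition logser :: "nat \<Rightarrow> hser" where
  "logser k = (\<lambda>n. if n = 0 then (\<lambda>v. 0)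
                   else (\<lambda>v. smult (1 / of_nat n) (dpoly n) * wmon (zw [n * k]) v))"

definition mzv :: "nat list \<Rightarrow> real" where
  "mzv ks = infsum (\<lambda>ms. \<Prod>j<length ks. 1 / real (ms ! j) ^ (ks ! j))
     {ms. length ms = length ks \<and> sorted_wrt (>) ms \<and> (\<forall>m\<in>set ms. m > 0)}"

text \<open>all sequences obtained by replacing each comma by a comma or a plus (with multiplicity)\<close>
fun merges :: "nat list \<Rightarrow> nat list list" where
  "merges [] = [[]]"
| "merges [a] = [[a]]"
| "merges (a # b # r) =
     map (\<lambda>p. a # p) (merges (b # r)) @ map (\<lambda>p. (a + hd p) # tl p) (merges (b # r))"

definition zeta_t :: "nat list \<Rightarrow> real \<Rightarrow> real" where
  "zeta_t ks t = sum_list (map (\<lambda>p. t ^ (length ks - length p) * mzv p) (merges ks))"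

end

theory Submission
  imports Defs "HOL-Library.Poly_Mapping"
begin

fun EE :: "(nat \<Rightarrow> 'a::comm_ring_1) \<Rightarrow> 'a \<Rightarrow> nat list \<Rightarrow> nat \<Rightarrow> 'a" where
  "EE x \<tau> [] m = 0"
| "EE x \<tau> (k # ks) m = x m ^ k * ((if ks = [] then 1 else 0) + (\<Sum>j\<in>{1..<m}. EE x \<tau> ks j) + \<tau> * EE x \<tau> ks m)"

definition QQ :: "(nat \<Rightarrow> 'a::comm_ring_1) \<Rightarrow> 'a \<Rightarrow> nat list \<Rightarrow> nat \<Rightarrow> 'a" where
  "QQ x \<tau> ks m = (if ks = [] then 1 else 0) + (\<Sum>j\<in>{1..m}. EE x \<tau> ks j)"

lemma QQ_0: "QQ x \<tau> ks 0 = (if ks = [] then 1 else 0)"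
  by (simp add: QQ_def)

lemma QQ_Suc: "QQ x \<tau> ks (Suc m) = QQ x \<tau> ks m + EE x \<tau> ks (Suc m)"
  by (simp add: QQ_def)

lemma EE_Cons: "EE x \<tau> (k # ks) m = x m ^ k * (QQ x \<tau> ks (m - 1) + \<tau> * EE x \<tau> ks m)"
proof -
  have "{1..<m} = {1..m-1}" by auto
  then show ?thesis by (simp add: QQ_def)
qed

lemma QQ_Nil: "QQ x \<tau> [] m = 1" by (simp add: QQ_def)

declare EE.simps(2)[simp del]

definition Phi :: "(rat poly \<Rightarrow> 'a::comm_ring_1) \<Rightarrow> (word \<Rightarrow> 'a) \<Rightarrow> hel \<Rightarrow> 'a" where
  "Phi \<iota> h F = (\<Sum>w\<in>supp F. \<iota> (F w) * h w)"

lemma supp_add: "supp (\<lambda>v. F v + G v) \<subseteq> supp F \<union> supp G"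
  by (auto simp: supp_def)
lemma supp_cmult: "supp (\<lambda>v. c * F v) \<subseteq> supp F"
  by (auto simp: supp_def)
lemma supp_lcat: "supp (lcat p F) = (\<lambda>w. p @ w) ` supp F"
proof
  show "supp (lcat p F) \<subseteq> (\<lambda>w. p @ w) ` supp F"
  proof
    fix v assume "v \<in> supp (lcat p F)"
    then have h: "take (length p) v = p" "F (drop (length p) v) \<noteq> 0"
      by (auto simp: supp_def lcat_def split: if_splits)
    then have e: "v = p @ drop (length p) v" by (metis append_take_drop_id)
    have "drop (length p) v \<in> supp F" using h(2) by (simp add: supp_def)
    then have "p @ drop (length p) v \<in> (\<lambda>w. p @ w) ` supp F" by (rule imageI)
    from this e show "v \<in> (\<lambda>w. p @ w) ` supp F" by metis
  qed
  show "(\<lambda>w. p @ w) ` supp F \<subseteq> supp (lcat p F)"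
    by (auto simp: supp_def lcat_def)
qed
lemma supp_wmon: "supp (wmon w) = {w}"
  by (auto simp: supp_def wmon_def)
lemma supp_sum: "supp (\<lambda>v. \<Sum>i\<in>I. F i v) \<subseteq> (\<Union>i\<in>I. supp (F i))"
proof
  fix v assume "v \<in> supp (\<lambda>v. \<Sum>i\<in>I. F i v)"
  then have "(\<Sum>i\<in>I. F i v) \<noteq> 0" by (simp add: supp_def)
  then obtain i where "i \<in> I" "F i v \<noteq> 0" by (meson sum.neutral)
  then show "v \<in> (\<Union>i\<in>I. supp (F i))" by (auto simp: supp_def)
qed
lemma supp_zero: "supp (\<lambda>v. 0) = {}"
  by (auto simp: supp_def)

locale ralg =
  fixes \<iota> :: "rat poly \<Rightarrow> 'a::comm_ring_1"
  assumes iadd: "\<iota> (a + b) = \<iota> a + \<iota> b"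
      and imult: "\<iota> (a * b) = \<iota> a * \<iota> b"
      and ione: "\<iota> 1 = 1"
begin

lemma izero[simp]: "\<iota> 0 = 0"
  using iadd[of 0 0] by simp

lemma iminus: "\<iota> (- a) = - \<iota> a"
  using iadd[of a "-a"] by (simp, metis add.commute eq_neg_iff_add_eq_0)

lemma idiff: "\<iota> (a - b) = \<iota> a - \<iota> b"
  using iadd[of a "-b"] iminus[of b] by simp

lemma isum: "\<iota> (\<Sum>i\<in>I. f i) = (\<Sum>i\<in>I. \<iota> (f i))"
  by (induction I rule: infinite_finite_induct) (auto simp: iadd)

lemma ipow: "\<iota> (a ^ n) = \<iota> a ^ n"
  by (induction n) (auto simp: imult ione)

lemma iof_nat: "\<iota> (of_nat n) = of_nat n"
  by (induction n) (auto simp: iadd ione)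

lemma Phi_superset:
  assumes "finite S" "supp F \<subseteq> S"
  shows "Phi \<iota> h F = (\<Sum>w\<in>S. \<iota> (F w) * h w)"
  unfolding Phi_def
  by (rule sum.mono_neutral_left) (use assms in \<open>auto simp: supp_def\<close>)

lemma Phi_add:
  assumes "finite (supp F)" "finite (supp G)"
  shows "Phi \<iota> h (\<lambda>v. F v + G v) = Phi \<iota> h F + Phi \<iota> h G"
proof -
  let ?S = "supp F \<union> supp G"
  have "Phi \<iota> h (\<lambda>v. F v + G v) = (\<Sum>w\<in>?S. \<iota> (F w + G w) * h w)"
    by (rule Phi_superset) (use assms supp_add in auto)
  also have "\<dots> = (\<Sum>w\<in>?S. \<iota> (F w) * h w) + (\<Sum>w\<in>?S. \<iota> (G w) * h w)"
    by (simp add: iadd algebra_simps sum.distrib)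
  also have "\<dots> = Phi \<iota> h F + Phi \<iota> h G"
  proof -
    have "Phi \<iota> h F = (\<Sum>w\<in>?S. \<iota> (F w) * h w)" by (rule Phi_superset) (use assms in auto)
    moreover have "Phi \<iota> h G = (\<Sum>w\<in>?S. \<iota> (G w) * h w)" by (rule Phi_superset) (use assms in auto)
    ultimately show ?thesis by simp
  qed
  finally show ?thesis .
qed

lemma Phi_cmult:
  assumes "finite (supp F)"
  shows "Phi \<iota> h (\<lambda>v. c * F v) = \<iota> c * Phi \<iota> h F"
proof -
  have "Phi \<iota> h (\<lambda>v. c * F v) = (\<Sum>w\<in>supp F. \<iota> (c * F w) * h w)"
    by (rule Phi_superset) (use assms supp_cmult in auto)
  also have "\<dots> = \<iota> c * Phi \<iota> h F"
    by (simp add: Phi_def imult sum_distrib_left algebra_simps)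
  finally show ?thesis .
qed

lemma Phi_sum:
  assumes "finite I" "\<And>i. i \<in> I \<Longrightarrow> finite (supp (F i))"
  shows "Phi \<iota> h (\<lambda>v. \<Sum>i\<in>I. F i v) = (\<Sum>i\<in>I. Phi \<iota> h (F i))"
proof -
  let ?S = "\<Union>i\<in>I. supp (F i)"
  have fS: "finite ?S" using assms by auto
  have "Phi \<iota> h (\<lambda>v. \<Sum>i\<in>I. F i v) = (\<Sum>w\<in>?S. \<iota> (\<Sum>i\<in>I. F i w) * h w)"
    by (rule Phi_superset) (use fS supp_sum in auto)
  also have "\<dots> = (\<Sum>i\<in>I. \<Sum>w\<in>?S. \<iota> (F i w) * h w)"
    by (simp add: isum sum_distrib_right) (rule sum.swap)
  also have "\<dots> = (\<Sum>i\<in>I. Phi \<iota> h (F i))"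
    by (rule sum.cong[OF refl], rule Phi_superset[symmetric]) (use fS in auto)
  finally show ?thesis .
qed

lemma Phi_zero: "Phi \<iota> h (\<lambda>v. 0) = 0"
  by (simp add: Phi_def supp_zero)

lemma Phi_lcat: "Phi \<iota> h (lcat p F) = Phi \<iota> (\<lambda>w. h (p @ w)) F"
proof -
  have "Phi \<iota> h (lcat p F) = (\<Sum>w\<in>(\<lambda>w. p @ w) ` supp F. \<iota> (lcat p F w) * h w)"
    by (simp add: Phi_def supp_lcat)
  also have "\<dots> = (\<Sum>w\<in>supp F. \<iota> (lcat p F (p @ w)) * h (p @ w))"
    by (subst sum.reindex) (auto simp: inj_on_def)
  also have "\<dots> = Phi \<iota> (\<lambda>w. h (p @ w)) F"
    by (simp add: Phi_def lcat_def)
  finally show ?thesis .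
qed

lemma Phi_wmon: "Phi \<iota> h (wmon w) = h w"
  by (simp add: Phi_def supp_wmon) (simp add: wmon_def ione)

lemma Phi_h_add: "Phi \<iota> (\<lambda>w. h1 w + h2 w) F = Phi \<iota> h1 F + Phi \<iota> h2 F"
  by (simp add: Phi_def algebra_simps sum.distrib)

lemma Phi_h_cmult: "Phi \<iota> (\<lambda>w. c * h w) F = c * Phi \<iota> h F"
  by (simp add: Phi_def algebra_simps sum_distrib_left)

lemma Phi_h_sum: "Phi \<iota> (\<lambda>w. \<Sum>i\<in>I. h i w) F = (\<Sum>i\<in>I. Phi \<iota> (h i) F)"
  unfolding Phi_def by (simp add: sum_distrib_left) (rule sum.swap)

lemma Phi_h_const: "Phi \<iota> (\<lambda>w. c) F = c * Phi \<iota> (\<lambda>w. 1) F"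
  using Phi_h_cmult[of c "\<lambda>w. 1" F] by simp

end

definition pos :: "nat list \<Rightarrow> bool" where
  "pos ks \<longleftrightarrow> (\<forall>k\<in>set ks. 0 < k)"

lemma pos_Nil[simp]: "pos []" and pos_Cons[simp]: "pos (k # ks) \<longleftrightarrow> 0 < k \<and> pos ks"
  by (auto simp: pos_def)

lemma dec_repX: "dec (replicate j X @ w) = (case dec w of [] \<Rightarrow> [] | c # r \<Rightarrow> (c + j) # r)"
  by (induction j) (auto split: list.splits)

lemma zw_Nil[simp]: "zw [] = []" by (simp add: zw_def)
lemma zw_Cons: "zw (k # ks) = replicate (k - 1) X @ Y # zw ks"
  by (simp add: zw_def)
lemma zw_Cons': "zw (k # ks) = zw [k] @ zw ks"
  by (simp add: zw_def)

lemma dec_zw1: "0 < k \<Longrightarrow> dec (zw [k] @ w) = k # dec w"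
  by (simp add: zw_Cons dec_repX)

lemma dec_zw: "pos ks \<Longrightarrow> dec (zw ks) = ks"
  by (induction ks) (auto simp: zw_Cons dec_repX)

lemma finite_supp_tharm: "finite (supp (tharm a b))"
proof (induction a b rule: tharm.induct)
  case (1 w) then show ?case by (simp add: supp_wmon)
next
  case (2 k w) then show ?case by (simp add: supp_wmon)
next
  case (3 k w1 l w2)
  let ?S = "supp (lcat (zw [k]) (tharm w1 (l # w2))) \<union> supp (lcat (zw [l]) (tharm (k # w1) w2))
     \<union> supp (lcat (zw [k + l]) (tharm w1 w2)) \<union> supp (lcat (replicate (k + l) X) (tharm w1 w2))"
  have "supp (tharm (k # w1) (l # w2)) \<subseteq> ?S"
    by (auto simp: supp_def split: if_splits)
  moreover have "finite ?S" using 3 by (simp add: supp_lcat)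
  ultimately show ?case by (rule finite_subset)
qed

context ralg begin

definition tau where "tau = \<iota> [:0, 1:]"

lemma iota_c1: "\<iota> [:1, -2:] = 1 - 2 * tau"
proof -
  have e: "[:1, -2:] = (1::rat poly) - (1 + 1) * [:0, 1:]" by (simp add: one_pCons)
  have "\<iota> [:1, -2:] = \<iota> (1 - (1 + 1) * [:0, 1:])" by (subst e) (rule refl)
  also have "\<dots> = 1 - (1 + 1) * tau" by (simp only: idiff imult iadd ione tau_def)
  finally show ?thesis by simp
qed

lemma iota_c2: "\<iota> [:0, -1, 1:] = tau ^ 2 - tau"
proof -
  have "[:0, -1, 1:] = (([:0, 1:] ^ 2)::rat poly) - [:0, 1:]" by (simp add: power2_eq_square)
  then show ?thesis by (simp add: idiff ipow tau_def)
qed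

lemma Phi_h_zero: "Phi \<iota> (\<lambda>w. 0) F = 0" by (simp add: Phi_def)

lemma Phi_4:
  assumes "finite (supp A)" "finite (supp B)" "finite (supp C)" "finite (supp D)"
  shows "Phi \<iota> h (\<lambda>v. A v + B v + c1 * C v + (if P then 0 else c2 * D v))
    = Phi \<iota> h A + Phi \<iota> h B + \<iota> c1 * Phi \<iota> h C + (if P then 0 else \<iota> c2 * Phi \<iota> h D)"
proof -
  have fC: "finite (supp (\<lambda>v. c * C v))" for c using assms(3) finite_subset[OF supp_cmult] by blast
  have fD: "finite (supp (\<lambda>v. c * D v))" for c using assms(4) finite_subset[OF supp_cmult] by blast
  have fAB: "finite (supp (\<lambda>v. A v + B v))" using assms finite_subset[OF supp_add] by blast
  have fABC: "finite (supp (\<lambda>v. A v + B v + c1 * C v))"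
    using fAB fC finite_subset[OF supp_add, of "\<lambda>v. A v + B v" "\<lambda>v. c1 * C v"] by blast
  show ?thesis
  proof (cases P)
    case True
    then have "Phi \<iota> h (\<lambda>v. A v + B v + c1 * C v + (if P then 0 else c2 * D v))
       = Phi \<iota> h (\<lambda>v. A v + B v + c1 * C v)" by simp
    also have "\<dots> = Phi \<iota> h A + Phi \<iota> h B + \<iota> c1 * Phi \<iota> h C"
      using Phi_add[OF fAB fC] Phi_add[OF assms(1,2)] Phi_cmult[OF assms(3)] by simp
    finally show ?thesis using True by simp
  next
    case False
    then have "Phi \<iota> h (\<lambda>v. A v + B v + c1 * C v + (if P then 0 else c2 * D v))
       = Phi \<iota> h (\<lambda>v. A v + B v + c1 * C v + c2 * D v)" by simp
    also have "\<dots> = Phi \<iota> h A + Phi \<iota> h B + \<iota> c1 * Phi \<iota> h C + \<iota> c2 * Phi \<iota> h D"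
      using Phi_add[OF fABC fD] Phi_add[OF fAB fC] Phi_add[OF assms(1,2)] Phi_cmult[OF assms(3)]
        Phi_cmult[OF assms(4)] by simp
    finally show ?thesis using False by simp
  qed
qed

lemma Phi_tharm_Cons:
  "Phi \<iota> h (tharm (k # w1) (l # w2)) =
     Phi \<iota> h (lcat (zw [k]) (tharm w1 (l # w2))) + Phi \<iota> h (lcat (zw [l]) (tharm (k # w1) w2))
   + \<iota> [:1, -2:] * Phi \<iota> h (lcat (zw [k + l]) (tharm w1 w2))
   + (if w1 = [] \<and> w2 = [] then 0 else \<iota> [:0, -1, 1:] * Phi \<iota> h (lcat (replicate (k + l) X) (tharm w1 w2)))"
  unfolding tharm.simps(3)
  by (rule Phi_4) (simp_all add: supp_lcat finite_supp_tharm)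

end

lemma key_alg:
  fixes X Y Q1 Q2 E1 E2 t Qa Qb :: "'a::comm_ring_1"
  shows "X * (Q1 * Qb + t * (E1 * Qb + Q1 * (Y * (Q2 + t * E2)) + E1 * (Y * (Q2 + t * E2))))
   + Y * (Qa * Q2 + t * ((X * (Q1 + t * E1)) * Q2 + Qa * E2 + (X * (Q1 + t * E1)) * E2))
   + (1 - 2 * t) * (X * Y * (Q1 * Q2 + t * (E1 * Q2 + Q1 * E2 + E1 * E2)))
   + (t ^ 2 - t) * (X * Y * (E1 * Q2 + Q1 * E2 + E1 * E2))
   = (X * (Q1 + t * E1)) * Qb + Qa * (Y * (Q2 + t * E2)) + (X * (Q1 + t * E1)) * (Y * (Q2 + t * E2))"
  by (simp add: algebra_simps power2_eq_square)

context ralg begin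

definition PE where "PE x m F = Phi \<iota> (\<lambda>w. EE x tau (dec w) m) F"
definition PQ where "PQ x m F = Phi \<iota> (\<lambda>w. QQ x tau (dec w) m) F"

lemma PE_lcat_zw:
  assumes "0 < k"
  shows "PE x m (lcat (zw [k]) T) = x m ^ k * (PQ x (m - 1) T + tau * PE x m T)"
proof -
  have "PE x m (lcat (zw [k]) T) = Phi \<iota> (\<lambda>w. x m ^ k * QQ x tau (dec w) (m - 1) + (x m ^ k * tau) * EE x tau (dec w) m) T"
    unfolding PE_def Phi_lcat
    by (rule arg_cong[where f = "\<lambda>h. Phi \<iota> h T"]) (simp add: fun_eq_iff dec_zw1[OF assms] EE_Cons algebra_simps)
  also have "\<dots> = x m ^ k * (PQ x (m - 1) T + tau * PE x m T)"
    by (simp add: Phi_h_add Phi_h_cmult PE_def PQ_def algebra_simps)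
  finally show ?thesis .
qed

lemma EE_repX: "EE x t (dec (replicate j X @ w)) m = x m ^ j * EE x t (dec w) m"
  by (cases "dec w") (simp_all add: dec_repX EE.simps(2) power_add algebra_simps)

lemma PE_lcat_X: "PE x m (lcat (replicate j X) T) = x m ^ j * PE x m T"
  unfolding PE_def Phi_lcat EE_repX by (rule Phi_h_cmult)

lemma PQ0_lcat_zw:
  assumes "0 < k"
  shows "PQ x 0 (lcat (zw [k]) T) = 0"
  unfolding PQ_def Phi_lcat by (simp add: dec_zw1[OF assms] QQ_0 Phi_h_zero)

lemma PQ0_lcat_X: "PQ x 0 (lcat (replicate j X) T) = PQ x 0 T"
proof -
  have "QQ x tau (dec (replicate j X @ w)) 0 = QQ x tau (dec w) 0" for w
    by (cases "dec w") (simp_all add: dec_repX QQ_0)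
  then show ?thesis unfolding PQ_def Phi_lcat by simp
qed

lemma PE_tharm_Cons:
  "PE x m (tharm (k # w1) (l # w2)) =
     PE x m (lcat (zw [k]) (tharm w1 (l # w2))) + PE x m (lcat (zw [l]) (tharm (k # w1) w2))
   + \<iota> [:1, -2:] * PE x m (lcat (zw [k + l]) (tharm w1 w2))
   + (if w1 = [] \<and> w2 = [] then 0 else \<iota> [:0, -1, 1:] * PE x m (lcat (replicate (k + l) X) (tharm w1 w2)))"
  unfolding PE_def by (rule Phi_tharm_Cons)

lemma PQ_tharm_Cons:
  "PQ x m (tharm (k # w1) (l # w2)) =
     PQ x m (lcat (zw [k]) (tharm w1 (l # w2))) + PQ x m (lcat (zw [l]) (tharm (k # w1) w2))
   + \<iota> [:1, -2:] * PQ x m (lcat (zw [k + l]) (tharm w1 w2))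
   + (if w1 = [] \<and> w2 = [] then 0 else \<iota> [:0, -1, 1:] * PQ x m (lcat (replicate (k + l) X) (tharm w1 w2)))"
  unfolding PQ_def by (rule Phi_tharm_Cons)

lemma PQ_Suc: "PQ x (Suc m) F = PQ x m F + PE x (Suc m) F"
  unfolding PQ_def PE_def QQ_Suc by (rule Phi_h_add)

lemma tharm_hom:
  "pos a \<Longrightarrow> pos b \<Longrightarrow>
    (\<forall>m. PE x m (tharm a b) = EE x tau a m * QQ x tau b (m - 1) + QQ x tau a (m - 1) * EE x tau b m
                              + EE x tau a m * EE x tau b m)
  \<and> (\<forall>m. PQ x m (tharm a b) = QQ x tau a m * QQ x tau b m)"
proof (induction a b rule: tharm.induct)
  case (1 w)
  then show ?case by (simp add: PE_def PQ_def Phi_wmon dec_zw QQ_Nil)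
next
  case (2 k w)
  then show ?case by (simp add: PE_def PQ_def Phi_wmon dec_zw QQ_Nil del: pos_Cons)
next
  case (3 k w1 l w2)
  have k: "0 < k" and l: "0 < l" and p1: "pos w1" and p2: "pos w2" using "3.prems" by auto
  note IH1 = "3.IH"(1)[OF p1 "3.prems"(2)]
  note IH2 = "3.IH"(2)[OF "3.prems"(1) p2]
  note IH3 = "3.IH"(3)[OF p1 p2]
  let ?T1 = "tharm w1 (l # w2)" and ?T2 = "tharm (k # w1) w2" and ?T3 = "tharm w1 w2"
  have kl: "0 < k + l" using k by simp
  have E: "PE x m (tharm (k # w1) (l # w2)) =
      EE x tau (k # w1) m * QQ x tau (l # w2) (m - 1) + QQ x tau (k # w1) (m - 1) * EE x tau (l # w2) m
      + EE x tau (k # w1) m * EE x tau (l # w2) m" for m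
  proof -
    have ifeq: "(if w1 = [] \<and> w2 = [] then 0 else \<iota> [:0, -1, 1:] * PE x m (lcat (replicate (k + l) X) ?T3))
        = (tau ^ 2 - tau) * (x m ^ (k + l) * PE x m ?T3)"
      using IH3 by (auto simp: iota_c2 PE_lcat_X)
    have "PE x m (tharm (k # w1) (l # w2)) =
        x m ^ k * (PQ x (m - 1) ?T1 + tau * PE x m ?T1) + x m ^ l * (PQ x (m - 1) ?T2 + tau * PE x m ?T2)
      + (1 - 2 * tau) * (x m ^ (k + l) * (PQ x (m - 1) ?T3 + tau * PE x m ?T3))
      + (tau ^ 2 - tau) * (x m ^ (k + l) * PE x m ?T3)"
      unfolding PE_tharm_Cons ifeq
      by (simp add: PE_lcat_zw k l kl iota_c1)
    also have "\<dots> = EE x tau (k # w1) m * QQ x tau (l # w2) (m - 1) + QQ x tau (k # w1) (m - 1) * EE x tau (l # w2) m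
      + EE x tau (k # w1) m * EE x tau (l # w2) m"
      using IH1 IH2 IH3 unfolding EE_Cons power_add
      by (simp only: key_alg)
    finally show ?thesis .
  qed
  have Q: "PQ x m (tharm (k # w1) (l # w2)) = QQ x tau (k # w1) m * QQ x tau (l # w2) m" for m
  proof (induction m)
    case 0
    have "PQ x 0 (tharm (k # w1) (l # w2)) = (if w1 = [] \<and> w2 = [] then 0 else \<iota> [:0, -1, 1:] * PQ x 0 ?T3)"
      unfolding PQ_tharm_Cons
      by (simp add: PQ0_lcat_zw k l kl PQ0_lcat_X)
    also have "\<dots> = 0" using IH3 by (auto simp: QQ_0)
    finally show ?case by (simp add: QQ_0)
  next
    case (Suc m)
    show ?case unfolding PQ_Suc Suc.IH E by (simp add: QQ_Suc algebra_simps)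
  qed
  show ?case using E Q by blast
qed

end

lemma pos_dec: "pos (dec w)"
  by (induction w rule: dec.induct) (auto split: list.splits)

lemma finite_supp_hmul:
  assumes "finite (supp A)" "finite (supp B)"
  shows "finite (supp (hmul A B))"
proof -
  have "supp (hmul A B) \<subseteq> (\<Union>a\<in>supp A. \<Union>b\<in>supp B. supp (tharm (dec a) (dec b)))"
  proof
    fix v assume "v \<in> supp (hmul A B)"
    then have "(\<Sum>a\<in>supp A. \<Sum>b\<in>supp B. A a * B b * tharm (dec a) (dec b) v) \<noteq> 0"
      by (simp add: supp_def hmul_def)
    then obtain a where a: "a \<in> supp A" "(\<Sum>b\<in>supp B. A a * B b * tharm (dec a) (dec b) v) \<noteq> 0"
      by (meson sum.neutral)
    then obtain b where b: "b \<in> supp B" "A a * B b * tharm (dec a) (dec b) v \<noteq> 0"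
      by (meson sum.neutral)
    then have "tharm (dec a) (dec b) v \<noteq> 0" by auto
    with a b show "v \<in> (\<Union>a\<in>supp A. \<Union>b\<in>supp B. supp (tharm (dec a) (dec b)))"
      by (auto simp: supp_def)
  qed
  moreover have "finite (\<Union>a\<in>supp A. \<Union>b\<in>supp B. supp (tharm (dec a) (dec b)))"
    using assms by (simp add: finite_supp_tharm)
  ultimately show ?thesis by (rule finite_subset)
qed

lemma finite_supp_cmult: "finite (supp F) \<Longrightarrow> finite (supp (\<lambda>v. c * F v))"
  by (rule finite_subset[OF supp_cmult])

lemma finite_supp_sum: "finite I \<Longrightarrow> (\<And>i. i \<in> I \<Longrightarrow> finite (supp (F i))) \<Longrightarrow> finite (supp (\<lambda>v. \<Sum>i\<in>I. F i v))"
  by (rule finite_subset[OF supp_sum]) auto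

lemma finite_supp_smul:
  assumes "\<And>i. finite (supp (S i))" "\<And>i. finite (supp (T i))"
  shows "finite (supp (smul S T n))"
  unfolding smul_def
  by (rule finite_supp_sum[where F = "\<lambda>i. hmul (S i) (T (n - i))"]) (simp_all add: finite_supp_hmul assms)

lemma finite_supp_sone: "finite (supp (sone n))"
  by (simp add: sone_def supp_wmon supp_zero)

lemma finite_supp_spow:
  assumes "\<And>i. finite (supp (S i))"
  shows "finite (supp (spow S m n))"
proof (induction m arbitrary: n)
  case 0 then show ?case by (simp add: finite_supp_sone)
next
  case (Suc m) then show ?case by (simp add: finite_supp_smul assms)
qed

context ralg begin

lemma PQ_hmul:
  assumes A: "finite (supp A)" and B: "finite (supp B)"
  shows "PQ x N (hmul A B) = PQ x N A * PQ x N B"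
proof -
  have fin_in: "finite (supp (\<lambda>v. \<Sum>b\<in>supp B. A a * B b * tharm (dec a) (dec b) v))" for a
    by (rule finite_supp_sum[where F = "\<lambda>b v. A a * B b * tharm (dec a) (dec b) v"]) (simp_all add: B finite_supp_cmult finite_supp_tharm)
  have "PQ x N (hmul A B) = PQ x N (\<lambda>v. \<Sum>a\<in>supp A. (\<Sum>b\<in>supp B. A a * B b * tharm (dec a) (dec b) v))"
    by (simp add: hmul_def)
  also have "\<dots> = (\<Sum>a\<in>supp A. PQ x N (\<lambda>v. \<Sum>b\<in>supp B. A a * B b * tharm (dec a) (dec b) v))"
    unfolding PQ_def
    by (rule Phi_sum[where F = "\<lambda>a v. \<Sum>b\<in>supp B. A a * B b * tharm (dec a) (dec b) v"]) (simp_all add: A fin_in)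
  also have "\<dots> = (\<Sum>a\<in>supp A. \<Sum>b\<in>supp B. PQ x N (\<lambda>v. A a * B b * tharm (dec a) (dec b) v))"
    unfolding PQ_def
    by (rule sum.cong[OF refl], rule Phi_sum[where F = "\<lambda>b v. A a * B b * tharm (dec a) (dec b) v" for a])
       (simp_all add: B finite_supp_cmult finite_supp_tharm)
  also have "\<dots> = (\<Sum>a\<in>supp A. \<Sum>b\<in>supp B. \<iota> (A a) * \<iota> (B b) * (QQ x tau (dec a) N * QQ x tau (dec b) N))"
    unfolding PQ_def Phi_cmult[OF finite_supp_tharm]
    using tharm_hom[OF pos_dec pos_dec] by (simp add: PQ_def imult)
  also have "\<dots> = PQ x N A * PQ x N B"
    by (simp add: PQ_def Phi_def sum_product algebra_simps)
  finally show ?thesis .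
qed

lemma PQ_smul:
  assumes "\<And>i. finite (supp (S i))" "\<And>i. finite (supp (T i))"
  shows "PQ x N (smul S T n) = (\<Sum>i\<le>n. PQ x N (S i) * PQ x N (T (n - i)))"
proof -
  have "PQ x N (smul S T n) = (\<Sum>i\<le>n. PQ x N (hmul (S i) (T (n - i))))"
    unfolding smul_def PQ_def
    by (rule Phi_sum[where F = "\<lambda>i. hmul (S i) (T (n - i))"]) (simp_all add: finite_supp_hmul assms)
  also have "\<dots> = (\<Sum>i\<le>n. PQ x N (S i) * PQ x N (T (n - i)))"
    by (simp add: PQ_hmul assms)
  finally show ?thesis .
qed

lemma PQ_sone: "PQ x N (sone n) = (if n = 0 then 1 else 0)"
  by (simp add: sone_def PQ_def Phi_wmon QQ_Nil Phi_zero)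

lemma PQ_spow:
  assumes "\<And>i. finite (supp (S i))"
  shows "PQ x N (spow S m n) = fps_nth (Abs_fps (\<lambda>i. PQ x N (S i)) ^ m) n"
proof (induction m arbitrary: n)
  case 0 then show ?case by (simp add: PQ_sone)
next
  case (Suc m)
  have "PQ x N (spow S (Suc m) n) = (\<Sum>i\<le>n. PQ x N (S i) * PQ x N (spow S m (n - i)))"
    by (simp add: PQ_smul assms finite_supp_spow)
  also have "\<dots> = fps_nth (Abs_fps (\<lambda>i. PQ x N (S i)) ^ Suc m) n"
    by (simp add: Suc fps_mult_nth atLeast0AtMost)
  finally show ?case .
qed

lemma PQ_texp:
  assumes "\<And>i. finite (supp (S i))"
  shows "PQ x N (texp S n) = (\<Sum>m\<le>n. \<iota> [:inverse (fact m):] * fps_nth (Abs_fps (\<lambda>i. PQ x N (S i)) ^ m) n)"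
proof -
  have "PQ x N (texp S n) = (\<Sum>m\<le>n. PQ x N (\<lambda>v. [:inverse (fact m):] * spow S m n v))"
    unfolding texp_def PQ_def
    by (rule Phi_sum[where F = "\<lambda>m v. [:inverse (fact m):] * spow S m n v"]) (simp, rule finite_supp_cmult[OF finite_supp_spow[OF assms]])
  also have "\<dots> = (\<Sum>m\<le>n. \<iota> [:inverse (fact m):] * fps_nth (Abs_fps (\<lambda>i. PQ x N (S i)) ^ m) n)"
    by (rule sum.cong[OF refl])
       (simp only: PQ_def Phi_cmult[OF finite_supp_spow[OF assms]] PQ_spow[OF assms, unfolded PQ_def])
  finally show ?thesis .
qed

end

lemma EE_rep:
  "EE x \<tau> (replicate (Suc n) k) m =
     (\<Sum>j\<le>n. \<tau> ^ j * x m ^ (k * Suc j) * QQ x \<tau> (replicate (n - j) k) (m - 1))"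
proof (induction n)
  case 0 then show ?case by (simp add: EE_Cons QQ_Nil)
next
  case (Suc n)
  have "EE x \<tau> (replicate (Suc (Suc n)) k) m
      = x m ^ k * QQ x \<tau> (replicate (Suc n) k) (m - 1) + \<tau> * x m ^ k * EE x \<tau> (replicate (Suc n) k) m"
    by (simp add: EE_Cons algebra_simps)
  also have "\<dots> = x m ^ k * QQ x \<tau> (replicate (Suc n) k) (m - 1)
      + (\<Sum>j\<le>n. \<tau> ^ Suc j * x m ^ (k * Suc (Suc j)) * QQ x \<tau> (replicate (n - j) k) (m - 1))"
    unfolding Suc sum_distrib_left by (simp add: algebra_simps power_add)
  also have "\<dots> = (\<Sum>j\<le>Suc n. \<tau> ^ j * x m ^ (k * Suc j) * QQ x \<tau> (replicate (Suc n - j) k) (m - 1))"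
    by (subst sum.atMost_Suc_shift) simp
  finally show ?case .
qed

definition ff :: "(nat \<Rightarrow> 'a::comm_ring_1) \<Rightarrow> 'a \<Rightarrow> nat \<Rightarrow> nat \<Rightarrow> 'a fps" where
  "ff x \<tau> k m = Abs_fps (\<lambda>j. if j = 0 then 1 else \<tau> ^ (j - 1) * x m ^ (k * j))"

definition Gf :: "(nat \<Rightarrow> 'a::comm_ring_1) \<Rightarrow> 'a \<Rightarrow> nat \<Rightarrow> nat \<Rightarrow> 'a fps" where
  "Gf x \<tau> k N = Abs_fps (\<lambda>n. QQ x \<tau> (replicate n k) N)"

definition hh :: "(nat \<Rightarrow> 'a::comm_ring_1) \<Rightarrow> 'a \<Rightarrow> nat \<Rightarrow> nat \<Rightarrow> 'a fps" where
  "hh x \<tau> k m = Abs_fps (\<lambda>i. (\<tau> ^ Suc i - (\<tau> - 1) ^ Suc i) * x m ^ (k * Suc i))"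

definition HH :: "(nat \<Rightarrow> 'a::comm_ring_1) \<Rightarrow> 'a \<Rightarrow> nat \<Rightarrow> nat \<Rightarrow> 'a fps" where
  "HH x \<tau> k N = Abs_fps (\<lambda>i. (\<tau> ^ Suc i - (\<tau> - 1) ^ Suc i) * (\<Sum>m\<in>{1..N}. x m ^ (k * Suc i)))"

lemma Gf_Suc: "Gf x \<tau> k (Suc N) = ff x \<tau> k (Suc N) * Gf x \<tau> k N"
proof (rule fps_ext)
  fix n
  show "fps_nth (Gf x \<tau> k (Suc N)) n = fps_nth (ff x \<tau> k (Suc N) * Gf x \<tau> k N) n"
  proof (cases n)
    case 0 then show ?thesis by (simp add: Gf_def ff_def QQ_Nil fps_mult_nth)
  next
    case (Suc n')
    have "fps_nth (ff x \<tau> k (Suc N) * Gf x \<tau> k N) n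
        = (\<Sum>i\<le>Suc n'. fps_nth (ff x \<tau> k (Suc N)) i * QQ x \<tau> (replicate (Suc n' - i) k) N)"
      by (simp add: fps_mult_nth Gf_def Suc atLeast0AtMost)
    also have "\<dots> = QQ x \<tau> (replicate (Suc n') k) N
        + (\<Sum>j\<le>n'. \<tau> ^ j * x (Suc N) ^ (k * Suc j) * QQ x \<tau> (replicate (n' - j) k) N)"
      by (subst sum.atMost_Suc_shift) (simp add: ff_def)
    also have "\<dots> = QQ x \<tau> (replicate (Suc n') k) (Suc N)"
      by (simp only: QQ_Suc EE_rep diff_Suc_1)
    finally show ?thesis by (simp add: Gf_def Suc)
  qed
qed

lemma Gf_0: "Gf x \<tau> k 0 = 1"
  by (rule fps_ext) (simp add: Gf_def QQ_0)

lemma HH_0: "HH x \<tau> k 0 = 0"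
  by (rule fps_ext) (simp add: HH_def)

lemma HH_Suc: "HH x \<tau> k (Suc N) = HH x \<tau> k N + hh x \<tau> k (Suc N)"
  by (rule fps_ext) (simp add: HH_def hh_def algebra_simps)

lemma D_ident:
  fixes \<tau> :: "'a::comm_ring_1"
  shows "(\<tau> ^ Suc n - (\<tau> - 1) ^ Suc n) + (\<Sum>i<n. \<tau> ^ i * (\<tau> ^ (n - i) - (\<tau> - 1) ^ (n - i)))
     = of_nat (Suc n) * \<tau> ^ n"
proof -
  have g: "\<tau> ^ Suc n - (\<tau> - 1) ^ Suc n = (\<Sum>i<Suc n. (\<tau> - 1) ^ (Suc n - Suc i) * \<tau> ^ i)"
    using power_diff_sumr2[of \<tau> "Suc n" "\<tau> - 1"] by simp
  have "(\<Sum>i<n. \<tau> ^ i * (\<tau> ^ (n - i) - (\<tau> - 1) ^ (n - i)))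
      = (\<Sum>i<n. \<tau> ^ n) - (\<Sum>i<n. (\<tau> - 1) ^ (Suc n - Suc i) * \<tau> ^ i)"
    by (simp add: sum_subtractf algebra_simps power_add[symmetric])
  also have "(\<Sum>i<n. \<tau> ^ n) = of_nat n * \<tau> ^ n" by simp
  also have "(\<Sum>i<n. (\<tau> - 1) ^ (Suc n - Suc i) * \<tau> ^ i) = (\<tau> ^ Suc n - (\<tau> - 1) ^ Suc n) - \<tau> ^ n"
    unfolding g by simp
  finally show ?thesis by (simp add: algebra_simps)
qed

lemma ff_deriv: "fps_deriv (ff x \<tau> k m) = ff x \<tau> k m * hh x \<tau> k m"
proof (rule fps_ext)
  fix n
  let ?y = "x m ^ k"
  let ?D = "\<lambda>j. \<tau> ^ j - (\<tau> - 1) ^ j"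
  have "fps_nth (ff x \<tau> k m * hh x \<tau> k m) n
      = (\<Sum>i\<le>n. fps_nth (ff x \<tau> k m) i * ((?D (Suc (n - i))) * ?y ^ Suc (n - i)))"
    by (simp add: fps_mult_nth hh_def atLeast0AtMost power_mult power_add)
  also have "\<dots> = ?D (Suc n) * ?y ^ Suc n + (\<Sum>i<n. \<tau> ^ i * ?y ^ Suc i * (?D (n - i) * ?y ^ (n - i)))"
  proof -
    have "(\<Sum>i\<le>n. fps_nth (ff x \<tau> k m) i * ((?D (Suc (n - i))) * ?y ^ Suc (n - i)))
      = ?D (Suc n) * ?y ^ Suc n + (\<Sum>i<n. fps_nth (ff x \<tau> k m) (Suc i) * ((?D (Suc (n - Suc i))) * ?y ^ Suc (n - Suc i)))"
      by (subst sum.atMost_shift) (simp add: ff_def atMost_atLeast0 lessThan_atLeast0)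
    also have "(\<Sum>i<n. fps_nth (ff x \<tau> k m) (Suc i) * ((?D (Suc (n - Suc i))) * ?y ^ Suc (n - Suc i)))
        = (\<Sum>i<n. \<tau> ^ i * ?y ^ Suc i * (?D (n - i) * ?y ^ (n - i)))"
      by (rule sum.cong) (auto simp: ff_def power_mult power_add Suc_diff_Suc)
    finally show ?thesis .
  qed
  also have "\<dots> = ?D (Suc n) * ?y ^ Suc n + (\<Sum>i<n. ?y ^ Suc n * (\<tau> ^ i * ?D (n - i)))"
  proof -
    have "\<tau> ^ i * ?y ^ Suc i * (?D (n - i) * ?y ^ (n - i)) = ?y ^ Suc n * (\<tau> ^ i * ?D (n - i))" if "i < n" for i
    proof -
      have e: "Suc i + (n - i) = Suc n" using that by simp
      have "?y ^ Suc i * ?y ^ (n - i) = ?y ^ Suc n" by (metis power_add e)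
      then show ?thesis by (simp add: algebra_simps)
    qed
    then show ?thesis by (intro arg_cong2[where f = "(+)"] refl sum.cong) auto
  qed
  also have "\<dots> = ?y ^ Suc n * ?D (Suc n) + ?y ^ Suc n * (\<Sum>i<n. \<tau> ^ i * ?D (n - i))"
    by (simp only: sum_distrib_left mult.commute)
  also have "\<dots> = ?y ^ Suc n * (?D (Suc n) + (\<Sum>i<n. \<tau> ^ i * ?D (n - i)))"
    by (rule distrib_left[symmetric])
  also have "\<dots> = ?y ^ Suc n * (of_nat (Suc n) * \<tau> ^ n)"
    using D_ident[of \<tau> n] by simp
  also have "\<dots> = fps_nth (fps_deriv (ff x \<tau> k m)) n"
    by (simp add: ff_def power_mult power_add algebra_simps)
  finally show "fps_nth (fps_deriv (ff x \<tau> k m)) n = fps_nth (ff x \<tau> k m * hh x \<tau> k m) n" by simp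
qed

lemma Gf_ode: "fps_deriv (Gf x \<tau> k N) = Gf x \<tau> k N * HH x \<tau> k N"
proof (induction N)
  case 0 then show ?case by (simp add: Gf_0 HH_0)
next
  case (Suc N)
  show ?case
    by (simp add: Gf_Suc HH_Suc Suc ff_deriv algebra_simps)
qed

lemma ode_unique:
  fixes F G H :: "'a::comm_ring_1 fps"
  assumes cancel: "\<And>n a. of_nat (Suc n) * a = (0::'a) \<Longrightarrow> a = 0"
    and dF: "fps_deriv F = F * H" and dG: "fps_deriv G = G * H" and z: "fps_nth F 0 = fps_nth G 0"
  shows "F = G"
proof -
  have "\<forall>i\<le>n. fps_nth F i = fps_nth G i" for n
  proof (induction n)
    case 0 then show ?case using z by simp
  next
    case (Suc n)
    have "of_nat (Suc n) * fps_nth F (Suc n) = fps_nth (F * H) n"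
      using arg_cong[OF dF, of "\<lambda>P. fps_nth P n"] by simp
    also have "\<dots> = fps_nth (G * H) n"
      unfolding fps_mult_nth using Suc by (intro sum.cong) auto
    also have "\<dots> = of_nat (Suc n) * fps_nth G (Suc n)"
      using arg_cong[OF dG, of "\<lambda>P. fps_nth P n"] by simp
    finally have "of_nat (Suc n) * (fps_nth F (Suc n) - fps_nth G (Suc n)) = 0"
      by (simp add: algebra_simps)
    then have "fps_nth F (Suc n) = fps_nth G (Suc n)" using cancel by fastforce
    with Suc show ?case using le_Suc_eq by auto
  qed
  then show ?thesis by (intro fps_ext) auto
qed

lemma power_nth_zero:
  fixes l :: "'a::comm_ring_1 fps"
  assumes "fps_nth l 0 = 0" "j < m"
  shows "fps_nth (l ^ m) j = 0"
  using assms(2)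
proof (induction m arbitrary: j)
  case 0 then show ?case by simp
next
  case (Suc m)
  have "fps_nth (l ^ Suc m) j = (\<Sum>i=0..j. fps_nth l i * fps_nth (l ^ m) (j - i))"
    by (simp add: fps_mult_nth)
  also have "\<dots> = 0"
  proof (rule sum.neutral, intro ballI)
    fix i assume i: "i \<in> {0..j}"
    show "fps_nth l i * fps_nth (l ^ m) (j - i) = 0"
    proof (cases i)
      case 0 then show ?thesis using assms(1) by simp
    next
      case (Suc i')
      then have "j - i < m" using i Suc.prems by auto
      then show ?thesis using Suc.IH by simp
    qed
  qed
  finally show ?case .
qed

context ralg begin

lemma cancel_nat: "of_nat (Suc n) * (a::'a) = 0 \<Longrightarrow> a = 0"
proof -
  assume h: "of_nat (Suc n) * a = 0"
  have e: "[:inverse (of_nat (Suc n)):] * of_nat (Suc n) = (1 :: rat poly)"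
    by (simp add: of_nat_poly del: of_nat_Suc)
  have "\<iota> [:inverse (of_nat (Suc n)):] * of_nat (Suc n) = \<iota> ([:inverse (of_nat (Suc n)):] * of_nat (Suc n))"
    by (simp only: imult iof_nat)
  also have "\<dots> = 1" by (simp only: e ione)
  finally have e2: "\<iota> [:inverse (of_nat (Suc n)):] * of_nat (Suc n) = 1" .
  have "a = (\<iota> [:inverse (of_nat (Suc n)):] * of_nat (Suc n)) * a" by (simp only: e2 mult_1_left)
  also have "\<dots> = \<iota> [:inverse (of_nat (Suc n)):] * (of_nat (Suc n) * a)" by (rule mult.assoc)
  also have "\<dots> = 0" by (simp only: h mult_zero_right)
  finally show "a = 0" .
qed

definition cm :: "nat \<Rightarrow> 'a" where "cm m = \<iota> [:inverse (fact m):]"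

lemma cm_Suc: "cm (Suc m) * of_nat (Suc m) = cm m"
proof -
  have e: "[:inverse (fact (Suc m)):] * of_nat (Suc m) = ([:inverse (fact m):] :: rat poly)"
    by (simp add: of_nat_poly del: of_nat_Suc)
  have "cm (Suc m) * of_nat (Suc m) = \<iota> ([:inverse (fact (Suc m)):] * of_nat (Suc m))"
    by (simp only: cm_def imult iof_nat)
  also have "\<dots> = cm m" by (simp only: e cm_def)
  finally show ?thesis .
qed

definition EM :: "'a fps \<Rightarrow> nat \<Rightarrow> 'a fps" where
  "EM l M = (\<Sum>m\<le>M. fps_const (cm m) * l ^ m)"

lemma EM_deriv: "fps_deriv (EM l (Suc M)) = EM l M * fps_deriv l"
proof -
  have "fps_deriv (EM l (Suc M)) = (\<Sum>m\<le>Suc M. fps_const (cm m) * (of_nat m * fps_deriv l * l ^ (m - 1)))"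
    unfolding EM_def fps_deriv_sum by (simp only: fps_deriv_mult_const_left fps_deriv_power')
  also have "\<dots> = (\<Sum>m\<le>M. fps_const (cm (Suc m)) * (of_nat (Suc m) * fps_deriv l * l ^ m))"
    by (subst sum.atMost_Suc_shift) simp
  also have "\<dots> = (\<Sum>m\<le>M. fps_const (cm m) * l ^ m * fps_deriv l)"
  proof (rule sum.cong[OF refl])
    fix m
    have h: "fps_const (cm (Suc m)) * of_nat (Suc m) = fps_const (cm m)"
      by (simp only: fps_of_nat[symmetric] fps_const_mult cm_Suc)
    have "fps_const (cm (Suc m)) * (of_nat (Suc m) * fps_deriv l * l ^ m)
       = (fps_const (cm (Suc m)) * of_nat (Suc m)) * l ^ m * fps_deriv l"
      by (simp only: mult_ac)
    then show "fps_const (cm (Suc m)) * (of_nat (Suc m) * fps_deriv l * l ^ m) = fps_const (cm m) * l ^ m * fps_deriv l"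
      by (simp only: h)
  qed
  also have "\<dots> = EM l M * fps_deriv l"
    by (simp add: EM_def sum_distrib_right)
  finally show ?thesis .
qed

definition TT :: "'a fps \<Rightarrow> 'a fps" where
  "TT l = Abs_fps (\<lambda>n. \<Sum>m\<le>n. cm m * fps_nth (l ^ m) n)"

lemma EM_nth:
  assumes "fps_nth l 0 = 0" "j \<le> M"
  shows "fps_nth (EM l M) j = fps_nth (TT l) j"
proof -
  have "fps_nth (EM l M) j = (\<Sum>m\<le>M. cm m * fps_nth (l ^ m) j)"
    by (simp add: EM_def fps_sum_nth)
  also have "\<dots> = (\<Sum>m\<le>j. cm m * fps_nth (l ^ m) j)"
  proof (rule sum.mono_neutral_right)
    show "\<forall>i\<in>{..M} - {..j}. cm i * fps_nth (l ^ i) j = 0"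
      using power_nth_zero[OF assms(1)] by auto
  qed (use assms in auto)
  finally show ?thesis by (simp add: TT_def)
qed

lemma TT_deriv:
  assumes l0: "fps_nth l 0 = 0"
  shows "fps_deriv (TT l) = TT l * fps_deriv l"
proof (rule fps_ext)
  fix n
  have "fps_nth (fps_deriv (TT l)) n = of_nat (Suc n) * fps_nth (TT l) (Suc n)" by simp
  also have "\<dots> = of_nat (Suc n) * fps_nth (EM l (Suc n)) (Suc n)"
    using EM_nth[OF l0, of "Suc n" "Suc n"] by simp
  also have "\<dots> = fps_nth (fps_deriv (EM l (Suc n))) n" by simp
  also have "\<dots> = fps_nth (EM l n * fps_deriv l) n" by (simp only: EM_deriv)
  also have "\<dots> = fps_nth (TT l * fps_deriv l) n"
    unfolding fps_mult_nth using EM_nth[OF l0] by (intro sum.cong) auto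
  finally show "fps_nth (fps_deriv (TT l)) n = fps_nth (TT l * fps_deriv l) n" .
qed

end

lemma finite_supp_wmon: "finite (supp (wmon w))" by (simp add: supp_wmon)

lemma logser_nz: "i \<noteq> 0 \<Longrightarrow> logser k i = (\<lambda>v. smult (1 / of_nat i) (dpoly i) * wmon (zw [i * k]) v)"
  by (simp only: logser_def if_False)

lemma finite_supp_logser: "finite (supp (logser k i))"
proof (cases "i = 0")
  case True then show ?thesis by (simp add: logser_def supp_zero)
next
  case False show ?thesis
    unfolding logser_nz[OF False] by (rule finite_supp_cmult) (simp add: supp_wmon)
qed

lemma QQ_single: "QQ x \<tau> [c] N = (\<Sum>m\<in>{1..N}. x m ^ c)"
  by (simp add: QQ_def EE_Cons QQ_Nil)

lemma pos_replicate: "0 < k \<Longrightarrow> pos (replicate n k)"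
  by (simp add: pos_def)

context ralg begin

lemma iota_dpoly: "\<iota> (dpoly j) = tau ^ j - (tau - 1) ^ j"
proof -
  have e: "[:-1, 1:] = [:0, 1:] - (1 :: rat poly)" by (simp add: one_pCons)
  show ?thesis unfolding dpoly_def e by (simp only: idiff ipow ione tau_def)
qed

lemma PQ_logser:
  assumes k: "0 < k"
  shows "PQ x N (logser k i) = (if i = 0 then 0 else \<iota> (smult (1 / of_nat i) (dpoly i)) * QQ x tau [i * k] N)"
proof (cases "i = 0")
  case True then show ?thesis by (simp add: logser_def PQ_def Phi_zero)
next
  case False
  have "PQ x N (logser k i) = PQ x N (\<lambda>v. smult (1 / of_nat i) (dpoly i) * wmon (zw [i * k]) v)"
    by (simp only: logser_nz[OF False])
  also have "\<dots> = \<iota> (smult (1 / of_nat i) (dpoly i)) * QQ x tau (dec (zw [i * k])) N"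
    unfolding PQ_def Phi_cmult[OF finite_supp_wmon] Phi_wmon ..
  also have "dec (zw [i * k]) = [i * k]"
    using k False by (intro dec_zw) simp
  finally show ?thesis using False by simp
qed

lemma smult_cancel: "of_nat (Suc i) * \<iota> (smult (1 / of_nat (Suc i)) p) = \<iota> p"
proof -
  have e: "of_nat (Suc i) * smult (1 / of_nat (Suc i)) p = (p :: rat poly)"
    by (simp add: of_nat_poly del: of_nat_Suc)
  have "of_nat (Suc i) * \<iota> (smult (1 / of_nat (Suc i)) p) = \<iota> (of_nat (Suc i) * smult (1 / of_nat (Suc i)) p)"
    by (simp only: imult iof_nat)
  also have "\<dots> = \<iota> p" by (simp only: e)
  finally show ?thesis .
qed

lemma part1_Phi:
  assumes k: "0 < k"
  shows "PQ x N (texp (logser k) n) = PQ x N (geomser k n)"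
proof -
  define l where "l = Abs_fps (\<lambda>i. PQ x N (logser k i))"
  have l0: "fps_nth l 0 = 0" by (simp add: l_def PQ_logser[OF k])
  have dl: "fps_deriv l = HH x tau k N"
  proof (rule fps_ext)
    fix i
    have "fps_nth (fps_deriv l) i = of_nat (Suc i) * (\<iota> (smult (1 / of_nat (Suc i)) (dpoly (Suc i))) * QQ x tau [Suc i * k] N)"
      by (simp add: l_def PQ_logser[OF k] del: of_nat_Suc)
    also have "\<dots> = \<iota> (dpoly (Suc i)) * QQ x tau [Suc i * k] N"
      by (simp only: mult.assoc[symmetric] smult_cancel)
    also have "\<dots> = fps_nth (HH x tau k N) i"
      by (simp add: HH_def iota_dpoly QQ_single mult.commute)
    finally show "fps_nth (fps_deriv l) i = fps_nth (HH x tau k N) i" .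
  qed
  have T: "PQ x N (texp (logser k) n) = fps_nth (TT l) n" for n
    by (simp add: PQ_texp finite_supp_logser TT_def cm_def l_def)
  have TG: "TT l = Gf x tau k N"
  proof (rule ode_unique[OF cancel_nat])
    show "fps_deriv (TT l) = TT l * HH x tau k N" using TT_deriv[OF l0] dl by simp
    show "fps_deriv (Gf x tau k N) = Gf x tau k N * HH x tau k N" by (rule Gf_ode)
    show "fps_nth (TT l) 0 = fps_nth (Gf x tau k N) 0"
      by (simp add: TT_def cm_def Gf_def QQ_Nil ione flip: one_pCons)
  qed
  have "PQ x N (geomser k n) = QQ x tau (replicate n k) N"
    by (simp add: geomser_def PQ_def Phi_wmon dec_zw pos_replicate k)
  then show ?thesis using T TG by (simp add: Gf_def)
qed

end

type_synonym mono = "nat \<Rightarrow>\<^sub>0 nat"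
type_synonym RR = "mono \<Rightarrow>\<^sub>0 rat poly"

definition iR :: "rat poly \<Rightarrow> RR" where "iR c = Poly_Mapping.single 0 c"

interpretation R: ralg iR
  by unfold_locales (simp_all add: iR_def single_add mult_single)

definition Xv :: "nat \<Rightarrow> RR" where "Xv m = Poly_Mapping.single (Poly_Mapping.single m 1) 1"

lemma Xv_pow: "Xv m ^ c = Poly_Mapping.single (Poly_Mapping.single m c) 1"
proof (induction c)
  case 0 then show ?case by simp
next
  case (Suc c)
  have "Xv m ^ Suc c = Xv m * Xv m ^ c" by simp
  also have "\<dots> = Poly_Mapping.single (Poly_Mapping.single m 1 + Poly_Mapping.single m c) 1"
    by (simp only: Suc) (simp add: Xv_def mult_single)
  also have "Poly_Mapping.single m 1 + Poly_Mapping.single m c = Poly_Mapping.single m (Suc c)"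
    by (simp add: single_add[symmetric])
  finally show ?case .
qed

lemma keys_mono_add: "Poly_Mapping.keys ((a::mono) + b) = Poly_Mapping.keys a \<union> Poly_Mapping.keys b"
  by (auto simp: in_keys_iff lookup_add)

lemma keys_sum_sub: "Poly_Mapping.keys (sum f A) \<subseteq> (\<Union>a\<in>A. Poly_Mapping.keys (f a :: RR))"
proof (induction A rule: infinite_finite_induct)
  case (insert a A) then show ?case using keys_add[of "f a" "sum f A"] by auto
qed auto

lemma LS1: "Poly_Mapping.lookup (Poly_Mapping.single k v * p) (k + q) = (v::rat poly) * Poly_Mapping.lookup (p::RR) q"
proof -
  have "Poly_Mapping.lookup (Poly_Mapping.single k v * p) (k + q) = (\<Sum>l. (v when k = l) * (\<Sum>q'. Poly_Mapping.lookup p q' when k + q = l + q'))"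
    by (simp add: lookup_mult lookup_single)
  also have "\<dots> = (\<Sum>l. (v * (\<Sum>q'. Poly_Mapping.lookup p q' when k + q = l + q') when k = l))"
    by (simp add: when_mult)
  also have "\<dots> = v * (\<Sum>q'. Poly_Mapping.lookup p q' when k + q = k + q')"
    by simp
  also have "\<dots> = v * Poly_Mapping.lookup p q" by simp
  finally show ?thesis .
qed

lemma LS0:
  assumes "\<And>q. l \<noteq> k + q"
  shows "Poly_Mapping.lookup (Poly_Mapping.single k (v::rat poly) * (p::RR)) l = 0"
proof -
  have "l \<notin> Poly_Mapping.keys (Poly_Mapping.single k v * p)"
    using keys_mult[of "Poly_Mapping.single k v" p] assms by (auto split: if_splits)
  then show ?thesis by (simp add: in_keys_iff)
qed

definition tauR :: RR where "tauR = iR [:0, 1:]"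

lemma tauR: "R.tau = tauR" by (simp add: R.tau_def tauR_def)

definition invQ :: "nat \<Rightarrow> nat \<Rightarrow> RR \<Rightarrow> bool" where
  "invQ m L p \<longleftrightarrow> (\<forall>\<kappa>\<in>Poly_Mapping.keys p. Poly_Mapping.keys \<kappa> \<subseteq> {1..m} \<and> card (Poly_Mapping.keys \<kappa>) \<le> L)"

definition invE :: "nat \<Rightarrow> nat \<Rightarrow> RR \<Rightarrow> bool" where
  "invE m L p \<longleftrightarrow> (\<forall>\<kappa>\<in>Poly_Mapping.keys p. Poly_Mapping.keys \<kappa> \<subseteq> {1..m} \<and> m \<in> Poly_Mapping.keys \<kappa> \<and> card (Poly_Mapping.keys \<kappa>) \<le> L)"

lemma keys_tau_mult: "Poly_Mapping.keys (tauR * p) \<subseteq> Poly_Mapping.keys p"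
  using keys_mult[of tauR p] by (auto simp: tauR_def iR_def split: if_splits)

lemma inv_lemma:
  "pos ks \<Longrightarrow> (\<forall>m. invQ m (length ks) (QQ Xv tauR ks m)) \<and> (\<forall>m. 0 < m \<longrightarrow> invE m (length ks) (EE Xv tauR ks m))"
proof (induction ks)
  case Nil then show ?case by (simp add: invQ_def invE_def QQ_Nil)
next
  case (Cons k ks)
  then have k: "0 < k" and IH: "\<forall>m. invQ m (length ks) (QQ Xv tauR ks m)" "\<forall>m. 0 < m \<longrightarrow> invE m (length ks) (EE Xv tauR ks m)"
    by auto
  have E: "invE m (Suc (length ks)) (EE Xv tauR (k # ks) m)" if m: "0 < m" for m
    unfolding invE_def
  proof
    fix \<kappa> assume h0: "\<kappa> \<in> Poly_Mapping.keys (EE Xv tauR (k # ks) m)"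
    let ?X = "Poly_Mapping.single (Poly_Mapping.single m k) (1::rat poly)"
    let ?P = "QQ Xv tauR ks (m - 1) + tauR * EE Xv tauR ks m"
    have h: "\<kappa> \<in> Poly_Mapping.keys (?X * ?P)"
      using h0 by (simp add: EE_Cons Xv_pow)
    have "\<kappa> \<in> {a + b |a b. a \<in> Poly_Mapping.keys ?X \<and> b \<in> Poly_Mapping.keys ?P}"
      using keys_mult[of ?X ?P] h by (rule subsetD)
    then obtain a b where ab: "\<kappa> = a + b" "a \<in> Poly_Mapping.keys ?X" "b \<in> Poly_Mapping.keys ?P"
      by blast
    have a: "a = Poly_Mapping.single m k" using ab(2) by (simp split: if_splits)
    have ka: "Poly_Mapping.keys a = {m}" using a k by simp
    have b: "Poly_Mapping.keys b \<subseteq> {1..m} \<and> card (Poly_Mapping.keys b) \<le> length ks"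
    proof -
      have "b \<in> Poly_Mapping.keys (QQ Xv tauR ks (m - 1)) \<union> Poly_Mapping.keys (tauR * EE Xv tauR ks m)"
        using keys_add[of "QQ Xv tauR ks (m - 1)" "tauR * EE Xv tauR ks m"] ab(3) by (rule subsetD)
      then have "b \<in> Poly_Mapping.keys (QQ Xv tauR ks (m - 1)) \<or> b \<in> Poly_Mapping.keys (EE Xv tauR ks m)"
        using keys_tau_mult[of "EE Xv tauR ks m"] by auto
      then show ?thesis
      proof
        assume hb: "b \<in> Poly_Mapping.keys (QQ Xv tauR ks (m - 1))"
        have "invQ (m - 1) (length ks) (QQ Xv tauR ks (m - 1))" using IH(1) by simp
        then have "Poly_Mapping.keys b \<subseteq> {1..m - 1} \<and> card (Poly_Mapping.keys b) \<le> length ks"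
          unfolding invQ_def using hb by simp
        moreover have "{1..m - 1} \<subseteq> {1..m}" by auto
        ultimately show ?thesis by blast
      next
        assume hb: "b \<in> Poly_Mapping.keys (EE Xv tauR ks m)"
        have "invE m (length ks) (EE Xv tauR ks m)" using IH(2) m by simp
        then show ?thesis unfolding invE_def using hb by simp
      qed
    qed
    have kk: "Poly_Mapping.keys \<kappa> = insert m (Poly_Mapping.keys b)" using ab(1) ka by (simp add: keys_mono_add)
    have "card (insert m (Poly_Mapping.keys b)) \<le> Suc (card (Poly_Mapping.keys b))"
      by (simp add: card_insert_if)
    then show "Poly_Mapping.keys \<kappa> \<subseteq> {1..m} \<and> m \<in> Poly_Mapping.keys \<kappa> \<and> card (Poly_Mapping.keys \<kappa>) \<le> Suc (length ks)"
      using b m kk by auto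
  qed
  have Q: "invQ m (Suc (length ks)) (QQ Xv tauR (k # ks) m)" for m
    unfolding invQ_def
  proof
    fix \<kappa> assume "\<kappa> \<in> Poly_Mapping.keys (QQ Xv tauR (k # ks) m)"
    then have "\<kappa> \<in> Poly_Mapping.keys (\<Sum>j\<in>{1..m}. EE Xv tauR (k # ks) j)" by (simp add: QQ_def)
    then have "\<kappa> \<in> (\<Union>j\<in>{1..m}. Poly_Mapping.keys (EE Xv tauR (k # ks) j))"
      using keys_sum_sub[of "\<lambda>j. EE Xv tauR (k # ks) j" "{1..m}"] by (rule rev_subsetD)
    then obtain j where j: "j \<in> {1..m}" "\<kappa> \<in> Poly_Mapping.keys (EE Xv tauR (k # ks) j)" by blast
    have "invE j (Suc (length ks)) (EE Xv tauR (k # ks) j)" using E j by simp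
    then have "Poly_Mapping.keys \<kappa> \<subseteq> {1..j} \<and> card (Poly_Mapping.keys \<kappa>) \<le> Suc (length ks)"
      unfolding invE_def using j by auto
    moreover have "{1..j} \<subseteq> {1..m}" using j by auto
    ultimately show "Poly_Mapping.keys \<kappa> \<subseteq> {1..m} \<and> card (Poly_Mapping.keys \<kappa>) \<le> Suc (length ks)"
      by blast
  qed
  show ?case using E Q by simp
qed

fun ee :: "nat list \<Rightarrow> mono" where
  "ee [] = 0"
| "ee (a # r) = Poly_Mapping.single (Suc (length r)) a + ee r"

lemma keys_ee: "pos c \<Longrightarrow> Poly_Mapping.keys (ee c) = {1..length c}"
  by (induction c) (auto simp: keys_mono_add)

lemma lookup_one_RR: "Poly_Mapping.lookup (1::RR) 0 = 1"
  by (simp add: lookup_one)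

lemma LS1': "Poly_Mapping.lookup (Poly_Mapping.single 0 v * p) q = (v::rat poly) * Poly_Mapping.lookup (p::RR) q"
  using LS1[of 0 v p q] by simp

lemma not_key_lookup: "\<kappa> \<notin> Poly_Mapping.keys p \<Longrightarrow> Poly_Mapping.lookup p \<kappa> = 0"
  by (simp add: in_keys_iff)

lemma coeffQ:
  "pos c \<Longrightarrow> length c = m \<Longrightarrow> pos ks \<Longrightarrow> length ks \<le> m \<Longrightarrow>
   Poly_Mapping.lookup (QQ Xv tauR ks m) (ee c) = (if ks = c then 1 else 0)"
proof (induction m arbitrary: c ks)
  case 0
  then show ?case by (simp add: QQ_Nil lookup_one_RR)
next
  case (Suc m)
  obtain a r where c: "c = a # r" using Suc.prems(2) by (cases c) auto
  have a: "0 < a" and r: "pos r" "length r = m" using Suc.prems c by auto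
  have kc: "Poly_Mapping.keys (ee c) = {1..Suc m}" using keys_ee[OF Suc.prems(1)] Suc.prems(2) by simp
  have kr: "Poly_Mapping.keys (ee r) = {1..m}" using keys_ee[OF r(1)] r(2) by simp
  have ec: "ee c = Poly_Mapping.single (Suc m) a + ee r" using c r by simp
  have first: "Poly_Mapping.lookup (QQ Xv tauR ks m) (ee c) = 0"
  proof (rule not_key_lookup, rule notI)
    assume "ee c \<in> Poly_Mapping.keys (QQ Xv tauR ks m)"
    then have "Poly_Mapping.keys (ee c) \<subseteq> {1..m}"
      using conjunct1[OF inv_lemma[OF Suc.prems(3)]] unfolding invQ_def by blast
    then show False using kc by auto
  qed
  have second: "Poly_Mapping.lookup (EE Xv tauR ks (Suc m)) (ee c) = (if ks = c then 1 else 0)"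
  proof (cases ks)
    case Nil then show ?thesis using c by simp
  next
    case (Cons b s)
    have b: "0 < b" and s: "pos s" "length s \<le> m" using Suc.prems Cons by auto
    let ?kb = "Poly_Mapping.single (Suc m) b"
    have invs: "invE (Suc m) (length s) (EE Xv tauR s (Suc m))"
      using inv_lemma[OF s(1)] by simp
    have invq: "invQ m (length s) (QQ Xv tauR s m)"
      using inv_lemma[OF s(1)] by simp
    have EEe: "EE Xv tauR ks (Suc m) = Poly_Mapping.single ?kb 1 * QQ Xv tauR s m
        + Poly_Mapping.single ?kb [:0, 1:] * EE Xv tauR s (Suc m)"
    proof -
      have "Poly_Mapping.single ?kb (1::rat poly) * tauR = Poly_Mapping.single ?kb [:0, 1:]"
        by (simp add: tauR_def iR_def mult_single)
      then show ?thesis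
        by (simp add: Cons EE_Cons Xv_pow distrib_left mult.assoc[symmetric])
    qed
    show ?thesis
    proof (cases "a = b")
      case True
      have ec': "ee c = ?kb + ee r" using ec True by simp
      have t1: "Poly_Mapping.lookup (Poly_Mapping.single ?kb 1 * QQ Xv tauR s m) (ee c) = (if s = r then 1 else 0)"
        unfolding ec' LS1 using Suc.IH[OF r(1) r(2) s(1) s(2)] by simp
      have t2: "Poly_Mapping.lookup (Poly_Mapping.single ?kb [:0, 1:] * EE Xv tauR s (Suc m)) (ee c) = 0"
        unfolding ec' LS1
      proof -
        have "ee r \<notin> Poly_Mapping.keys (EE Xv tauR s (Suc m))"
          using invs kr unfolding invE_def by auto
        then show "[:0, 1:] * Poly_Mapping.lookup (EE Xv tauR s (Suc m)) (ee r) = 0"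
          by (simp add: in_keys_iff)
      qed
      show ?thesis unfolding EEe lookup_add t1 t2 using True Cons c by simp
    next
      case False
      show ?thesis
      proof (cases "b < a")
        case True
        define q where "q = Poly_Mapping.single (Suc m) (a - b) + ee r"
        have ecq: "ee c = ?kb + q"
          unfolding ec q_def using True by (simp add: add.assoc[symmetric] single_add[symmetric])
        have kq: "Poly_Mapping.keys q = {1..Suc m}"
          unfolding q_def using True kr by (auto simp: keys_mono_add)
        have t1: "Poly_Mapping.lookup (QQ Xv tauR s m) q = 0"
        proof (rule not_key_lookup, rule notI)
          assume "q \<in> Poly_Mapping.keys (QQ Xv tauR s m)"
          then have "Poly_Mapping.keys q \<subseteq> {1..m}" using invq unfolding invQ_def by blast
          then show False using kq by auto
        qed
        have t2: "Poly_Mapping.lookup (EE Xv tauR s (Suc m)) q = 0"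
        proof (rule not_key_lookup, rule notI)
          assume "q \<in> Poly_Mapping.keys (EE Xv tauR s (Suc m))"
          then have "card (Poly_Mapping.keys q) \<le> length s" using invs unfolding invE_def by blast
          then show False using kq s(2) by simp
        qed
        show ?thesis unfolding EEe lookup_add ecq LS1 t1 t2 using False Cons c by simp
      next
        case False2: False
        then have lt: "a < b" using False by simp
        have nq: "ee c \<noteq> ?kb + q" for q
        proof
          assume "ee c = ?kb + q"
          then have "Poly_Mapping.lookup (ee c) (Suc m) = Poly_Mapping.lookup (?kb + q) (Suc m)" by simp
          moreover have "Poly_Mapping.lookup (ee c) (Suc m) = a"
          proof -
            have "Suc m \<notin> Poly_Mapping.keys (ee r)" using kr by simp
            then show ?thesis unfolding ec by (simp add: lookup_add in_keys_iff)
          qed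
          ultimately have "a = b + Poly_Mapping.lookup q (Suc m)" by (simp add: lookup_add)
          then show False using lt by simp
        qed
        show ?thesis unfolding EEe lookup_add using LS0[OF nq] Cons c lt by simp
      qed
    qed
  qed
  show ?case unfolding QQ_Suc lookup_add first second by simp
qed

lemma inj_PQ:
  fixes D :: hel
  assumes fin: "finite (supp D)" and good: "\<And>w. w \<in> supp D \<Longrightarrow> w = zw (dec w)"
    and z: "\<And>N. R.PQ Xv N D = 0"
  shows "D = (\<lambda>v. 0)"
proof (rule ccontr)
  assume "D \<noteq> (\<lambda>v. 0)"
  then have ne: "supp D \<noteq> {}" by (auto simp: supp_def)
  define L where "L = Max ((\<lambda>w. length (dec w)) ` supp D)"
  have "L \<in> (\<lambda>w. length (dec w)) ` supp D" unfolding L_def using fin ne by (intro Max_in) auto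
  then obtain w0 where w0: "w0 \<in> supp D" "length (dec w0) = L" by auto
  have le: "length (dec w) \<le> L" if "w \<in> supp D" for w
    unfolding L_def using fin that by (intro Max_ge) auto
  have "0 = Poly_Mapping.lookup (R.PQ Xv L D) (ee (dec w0))" using z by simp
  also have "\<dots> = (\<Sum>w\<in>supp D. D w * Poly_Mapping.lookup (QQ Xv tauR (dec w) L) (ee (dec w0)))"
    by (simp add: R.PQ_def Phi_def lookup_sum iR_def LS1' tauR)
  also have "\<dots> = (\<Sum>w\<in>supp D. if w = w0 then D w else 0)"
  proof (rule sum.cong[OF refl])
    fix w assume w: "w \<in> supp D"
    have "Poly_Mapping.lookup (QQ Xv tauR (dec w) L) (ee (dec w0)) = (if dec w = dec w0 then 1 else 0)"
      by (rule coeffQ) (use pos_dec w0 le w in auto)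
    moreover have "dec w = dec w0 \<longleftrightarrow> w = w0" using good[OF w] good[OF w0(1)] by metis
    ultimately show "D w * Poly_Mapping.lookup (QQ Xv tauR (dec w) L) (ee (dec w0)) = (if w = w0 then D w else 0)"
      by simp
  qed
  also have "\<dots> = D w0" using fin w0(1) by simp
  finally show False using w0(1) by (simp add: supp_def)
qed

definition goodS :: "hel \<Rightarrow> bool" where
  "goodS F \<longleftrightarrow> (\<forall>w\<in>supp F. w = zw (dec w))"

lemma zw_nonempty: "ks \<noteq> [] \<Longrightarrow> zw ks \<noteq> []"
  by (cases ks) (auto simp: zw_Cons)

lemma supp_tharm_Cons:
  assumes "v \<in> supp (tharm (k # w1) (l # w2))"
  shows "v \<in> supp (lcat (zw [k]) (tharm w1 (l # w2))) \<or> v \<in> supp (lcat (zw [l]) (tharm (k # w1) w2))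
    \<or> v \<in> supp (lcat (zw [k + l]) (tharm w1 w2))
    \<or> (\<not> (w1 = [] \<and> w2 = []) \<and> v \<in> supp (lcat (replicate (k + l) X) (tharm w1 w2)))"
  using assms unfolding tharm.simps(3) supp_def by (auto split: if_splits)

lemma good_tharm:
  "pos a \<Longrightarrow> pos b \<Longrightarrow> w \<in> supp (tharm a b) \<Longrightarrow> w = zw (dec w) \<and> (w = [] \<longrightarrow> a = [] \<and> b = [])"
proof (induction a b arbitrary: w rule: tharm.induct)
  case (1 b)
  then have "w = zw b" by (simp add: supp_wmon)
  then show ?case using 1 zw_nonempty[of b] by (auto simp: dec_zw)
next
  case (2 k a)
  then have "w = zw (k # a)" by (simp add: supp_wmon)
  then show ?case using 2 by (simp add: dec_zw zw_nonempty del: pos_Cons)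
next
  case (3 k w1 l w2)
  have k: "0 < k" and l: "0 < l" and p1: "pos w1" and p2: "pos w2" using "3.prems" by auto
  have lc: "w = zw (dec w) \<and> w \<noteq> []" if h1: "w \<in> supp (lcat (zw [c]) T)" and h2: "0 < c"
     and h3: "\<And>w'. w' \<in> supp T \<Longrightarrow> w' = zw (dec w')" for c T
  proof -
    obtain w' where w': "w = zw [c] @ w'" "w' \<in> supp T" using h1 unfolding supp_lcat by blast
    have "dec w = c # dec w'" using w'(1) h2 by (simp add: dec_zw1)
    then have "zw (dec w) = zw [c] @ zw (dec w')" by (simp only: zw_Cons'[of c "dec w'"])
    also have "\<dots> = w" using h3[OF w'(2)] w'(1) by simp
    finally show ?thesis using w'(1) by (simp add: zw_Cons)
  qed
  consider (a) "w \<in> supp (lcat (zw [k]) (tharm w1 (l # w2)))" | (b) "w \<in> supp (lcat (zw [l]) (tharm (k # w1) w2))"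
    | (c) "w \<in> supp (lcat (zw [k + l]) (tharm w1 w2))"
    | (d) "\<not> (w1 = [] \<and> w2 = [])" "w \<in> supp (lcat (replicate (k + l) X) (tharm w1 w2))"
    using supp_tharm_Cons[OF "3.prems"(3)] by blast
  then show ?case
  proof cases
    case a
    have "w = zw (dec w) \<and> w \<noteq> []" by (rule lc[OF a k]) (use "3.IH"(1)[OF p1 "3.prems"(2)] in blast)
    then show ?thesis by simp
  next
    case b
    have "w = zw (dec w) \<and> w \<noteq> []" by (rule lc[OF b l]) (use "3.IH"(2)[OF "3.prems"(1) p2] in blast)
    then show ?thesis by simp
  next
    case c
    have "w = zw (dec w) \<and> w \<noteq> []" by (rule lc[OF c]) (use k "3.IH"(3)[OF p1 p2] in auto)
    then show ?thesis by simp
  next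
    case d
    obtain w' where w': "w = replicate (k + l) X @ w'" "w' \<in> supp (tharm w1 w2)" using d(2) unfolding supp_lcat by blast
    have g: "w' = zw (dec w')" "w' \<noteq> []" using "3.IH"(3)[OF p1 p2 w'(2)] d(1) by auto
    obtain c r where cr: "dec w' = c # r" using g by (cases "dec w'") auto
    have c: "0 < c" using pos_dec[of w'] cr by simp
    have "zw (dec w) = zw ((c + (k + l)) # r)" using w'(1) cr by (simp add: dec_repX)
    also have "\<dots> = replicate (k + l) X @ zw (c # r)"
    proof -
      have "c + (k + l) - 1 = (k + l) + (c - 1)" using c by simp
      then show ?thesis by (simp add: zw_Cons replicate_add)
    qed
    also have "\<dots> = w" using w'(1) g(1) cr by simp
    finally show ?thesis using w'(1) k by simp
  qed
qed

lemma supp_hmul: "supp (hmul A B) \<subseteq> (\<Union>a\<in>supp A. \<Union>b\<in>supp B. supp (tharm (dec a) (dec b)))"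
proof
  fix v assume "v \<in> supp (hmul A B)"
  then have "(\<Sum>a\<in>supp A. \<Sum>b\<in>supp B. A a * B b * tharm (dec a) (dec b) v) \<noteq> 0"
    by (simp add: supp_def hmul_def)
  then obtain a where a: "a \<in> supp A" "(\<Sum>b\<in>supp B. A a * B b * tharm (dec a) (dec b) v) \<noteq> 0"
    by (meson sum.neutral)
  then obtain b where b: "b \<in> supp B" "A a * B b * tharm (dec a) (dec b) v \<noteq> 0"
    by (meson sum.neutral)
  then have "tharm (dec a) (dec b) v \<noteq> 0" by auto
  with a b show "v \<in> (\<Union>a\<in>supp A. \<Union>b\<in>supp B. supp (tharm (dec a) (dec b)))"
    by (auto simp: supp_def)
qed

lemma goodS_hmul: "goodS (hmul A B)"
  unfolding goodS_def using supp_hmul[of A B] good_tharm[OF pos_dec pos_dec] by blast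

lemma goodS_sum: "(\<And>i. i \<in> I \<Longrightarrow> goodS (F i)) \<Longrightarrow> goodS (\<lambda>v. \<Sum>i\<in>I. F i v)"
  unfolding goodS_def using supp_sum[of F I] by blast

lemma goodS_cmult: "goodS F \<Longrightarrow> goodS (\<lambda>v. c * F v)"
  unfolding goodS_def using supp_cmult[of c F] by blast

lemma goodS_add: "goodS F \<Longrightarrow> goodS G \<Longrightarrow> goodS (\<lambda>v. F v + G v)"
  unfolding goodS_def using supp_add[of F G] by blast

lemma goodS_wmon: "w = zw (dec w) \<Longrightarrow> goodS (wmon w)"
  by (simp add: goodS_def supp_wmon)

lemma goodS_zero: "goodS (\<lambda>v. 0)"
  by (simp add: goodS_def supp_zero)

lemma goodS_smul: "goodS (smul S T n)"
  unfolding smul_def by (rule goodS_sum[where F = "\<lambda>i. hmul (S i) (T (n - i))"]) (rule goodS_hmul)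

lemma goodS_sone: "goodS (sone n)"
  by (simp add: sone_def goodS_wmon goodS_zero)

lemma goodS_spow: "goodS (spow S m n)"
  by (cases m) (simp_all add: goodS_sone goodS_smul)

lemma goodS_texp: "goodS (texp S n)"
  unfolding texp_def
  by (rule goodS_sum[where F = "\<lambda>m v. [:inverse (fact m):] * spow S m n v"]) (rule goodS_cmult[OF goodS_spow])

lemma goodS_geomser: "0 < k \<Longrightarrow> goodS (geomser k n)"
  unfolding geomser_def by (rule goodS_wmon) (simp add: dec_zw pos_replicate)

lemma finite_supp_texp: "(\<And>i. finite (supp (S i))) \<Longrightarrow> finite (supp (texp S n))"
  unfolding texp_def
  by (rule finite_supp_sum[where F = "\<lambda>m v. [:inverse (fact m):] * spow S m n v"])
     (simp, rule finite_supp_cmult[OF finite_supp_spow])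

theorem part1:
  assumes k: "1 \<le> k"
  shows "geomser k = texp (logser k)"
proof (rule ext)
  fix n
  have k0: "0 < k" using k by simp
  let ?G = "geomser k n" and ?T = "texp (logser k) n"
  define D where "D = (\<lambda>v. ?G v + (-1) * ?T v)"
  have fG: "finite (supp ?G)" by (simp add: geomser_def finite_supp_wmon)
  have fT: "finite (supp ?T)" by (rule finite_supp_texp[OF finite_supp_logser])
  have fin: "finite (supp D)" unfolding D_def
    by (rule finite_subset[OF supp_add]) (rule finite_UnI[OF fG finite_supp_cmult[OF fT]])
  have good: "goodS D" unfolding D_def
    by (rule goodS_add[OF goodS_geomser[OF k0] goodS_cmult[OF goodS_texp]])
  have z: "R.PQ Xv N D = 0" for N
  proof -
    let ?h = "\<lambda>w. QQ Xv R.tau (dec w) N"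
    have "R.PQ Xv N D = Phi iR ?h (\<lambda>v. ?G v + (-1) * ?T v)" by (simp only: D_def R.PQ_def)
    also have "\<dots> = Phi iR ?h ?G + Phi iR ?h (\<lambda>v. (-1) * ?T v)"
      by (rule R.Phi_add[OF fG finite_supp_cmult[OF fT]])
    also have "\<dots> = R.PQ Xv N ?G + iR (-1) * R.PQ Xv N ?T"
      by (simp only: R.Phi_cmult[OF fT] R.PQ_def)
    also have "\<dots> = 0" using R.part1_Phi[OF k0, of Xv N n] by (simp add: R.iminus R.ione)
    finally show ?thesis .
  qed
  have "D = (\<lambda>v. 0)" by (rule inj_PQ[OF fin _ z]) (use good in \<open>auto simp: goodS_def\<close>)
  then show "?G = ?T" unfolding D_def by (auto simp: fun_eq_iff)
qed

fun SE :: "(nat \<Rightarrow> 'a::comm_ring_1) \<Rightarrow> nat list \<Rightarrow> nat \<Rightarrow> 'a" where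
  "SE x [] m = 0"
| "SE x (k # ks) m = x m ^ k * ((if ks = [] then 1 else 0) + (\<Sum>j\<in>{1..<m}. SE x ks j))"

definition SQ :: "(nat \<Rightarrow> 'a::comm_ring_1) \<Rightarrow> nat list \<Rightarrow> nat \<Rightarrow> 'a" where
  "SQ x ks m = (if ks = [] then 1 else 0) + (\<Sum>j\<in>{1..m}. SE x ks j)"

lemma SE_Cons: "SE x (k # ks) m = x m ^ k * SQ x ks (m - 1)"
proof -
  have "{1..<m} = {1..m-1}" by auto
  then show ?thesis by (simp add: SQ_def)
qed

declare SE.simps(2)[simp del]

lemma SQ_Nil: "SQ x [] m = 1" by (simp add: SQ_def)

lemma merges_len: "p \<in> set (merges ks) \<Longrightarrow> length p \<le> length ks \<and> (ks \<noteq> [] \<longrightarrow> p \<noteq> [])"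
proof (induction ks arbitrary: p rule: merges.induct)
  case (3 a b r)
  from "3.prems" obtain p' where p': "p' \<in> set (merges (b # r))" "p = a # p' \<or> p = (a + hd p') # tl p'"
    by auto
  have "length p' \<le> length (b # r)" "p' \<noteq> []" using "3.IH"[OF p'(1)] by auto
  with p'(2) show ?case by (cases p') auto
qed auto

lemma merges_ge: "(\<forall>a\<in>set ks. c \<le> a) \<Longrightarrow> p \<in> set (merges ks) \<Longrightarrow> (\<forall>a\<in>set p. c \<le> a)"
proof (induction ks arbitrary: p rule: merges.induct)
  case (3 a b r)
  then show ?case
  proof (cases "p \<in> set (map ((#) a) (merges (b # r)))")
    case True then show ?thesis using 3 by auto
  next
    case False
    then obtain p' where p': "p' \<in> set (merges (b # r))" "p = (a + hd p') # tl p'" using "3.prems" by auto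
    have "p' \<noteq> []" using merges_len[OF p'(1)] by simp
    then have "\<forall>a\<in>set (tl p'). c \<le> a" "c \<le> hd p'" using "3.IH"[OF _ p'(1)] "3.prems"(1)
      by (auto simp: list.set_sel)
    then show ?thesis using p'(2) by auto
  qed
qed auto

lemma sum_sum_list_swap:
  "(\<Sum>j\<in>J. sum_list (map (\<lambda>p. g p j) xs)) = sum_list (map (\<lambda>p. \<Sum>j\<in>J. g p j) xs)"
  by (induction xs) (simp_all add: sum.distrib)

lemma sum_list_map_cong: "(\<And>p. p \<in> set xs \<Longrightarrow> f p = g p) \<Longrightarrow> sum_list (map f xs) = sum_list (map g xs)"
  by (metis map_cong)

lemma QQ_from_EE:
  assumes "ks \<noteq> []" "\<And>j. EE x \<tau> ks j = sum_list (map (\<lambda>p. \<tau> ^ (length ks - length p) * SE x p j) (merges ks))"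
  shows "QQ x \<tau> ks m = sum_list (map (\<lambda>p. \<tau> ^ (length ks - length p) * SQ x p m) (merges ks))"
proof -
  have "QQ x \<tau> ks m = (\<Sum>j\<in>{1..m}. sum_list (map (\<lambda>p. \<tau> ^ (length ks - length p) * SE x p j) (merges ks)))"
    using assms by (simp add: QQ_def)
  also have "\<dots> = sum_list (map (\<lambda>p. \<Sum>j\<in>{1..m}. \<tau> ^ (length ks - length p) * SE x p j) (merges ks))"
    by (rule sum_sum_list_swap)
  also have "\<dots> = sum_list (map (\<lambda>p. \<tau> ^ (length ks - length p) * SQ x p m) (merges ks))"
  proof (rule sum_list_map_cong)
    fix p assume "p \<in> set (merges ks)"
    then have "p \<noteq> []" using merges_len assms(1) by blast
    then show "(\<Sum>j\<in>{1..m}. \<tau> ^ (length ks - length p) * SE x p j) = \<tau> ^ (length ks - length p) * SQ x p m"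
      by (simp add: SQ_def sum_distrib_left)
  qed
  finally show ?thesis .
qed

lemma sum_list_cmult: "sum_list (map (\<lambda>p. c * f p) xs) = (c::'a::comm_ring_1) * sum_list (map f xs)"
  by (induction xs) (simp_all add: algebra_simps)

lemma EE_merges:
  "EE x \<tau> ks m = sum_list (map (\<lambda>p. \<tau> ^ (length ks - length p) * SE x p m) (merges ks))"
proof (induction ks arbitrary: m rule: merges.induct)
  case 1 then show ?case by simp
next
  case (2 a) then show ?case by (simp add: EE_Cons QQ_Nil SE_Cons SQ_Nil)
next
  case (3 a b r)
  let ?M = "merges (b # r)" and ?L = "length (b # r)"
  have Q: "QQ x \<tau> (b # r) (m - 1) = sum_list (map (\<lambda>p. \<tau> ^ (?L - length p) * SQ x p (m - 1)) ?M)"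
    by (rule QQ_from_EE) (use 3 in auto)
  have s1: "sum_list (map (\<lambda>p. \<tau> ^ (length (a # b # r) - length p) * SE x p m) (map ((#) a) ?M))
      = x m ^ a * sum_list (map (\<lambda>p. \<tau> ^ (?L - length p) * SQ x p (m - 1)) ?M)"
    unfolding map_map o_def sum_list_cmult[symmetric]
    by (rule sum_list_map_cong) (simp add: SE_Cons algebra_simps)
  have s2: "sum_list (map (\<lambda>p. \<tau> ^ (length (a # b # r) - length p) * SE x p m) (map (\<lambda>p. (a + hd p) # tl p) ?M))
      = x m ^ a * (\<tau> * sum_list (map (\<lambda>p. \<tau> ^ (?L - length p) * SE x p m) ?M))"
    unfolding map_map o_def sum_list_cmult[symmetric]
  proof (rule sum_list_map_cong)
    fix p assume p: "p \<in> set ?M"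
    then have ne: "p \<noteq> []" and le: "length p \<le> ?L" using merges_len by blast+
    then obtain h q where hq: "p = h # q" by (cases p) auto
    show "\<tau> ^ (length (a # b # r) - length ((a + hd p) # tl p)) * SE x ((a + hd p) # tl p) m =
        x m ^ a * (\<tau> * (\<tau> ^ (?L - length p) * SE x p m))"
      unfolding hq using le hq by (simp add: SE_Cons power_add algebra_simps Suc_diff_le)
  qed
  have "EE x \<tau> (a # b # r) m = x m ^ a * (QQ x \<tau> (b # r) (m - 1) + \<tau> * EE x \<tau> (b # r) m)"
    by (rule EE_Cons)
  also have "\<dots> = x m ^ a * sum_list (map (\<lambda>p. \<tau> ^ (?L - length p) * SQ x p (m - 1)) ?M)
      + x m ^ a * (\<tau> * sum_list (map (\<lambda>p. \<tau> ^ (?L - length p) * SE x p m) ?M))"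
    unfolding Q "3.IH"[of m] by (simp only: distrib_left)
  also have "\<dots> = sum_list (map (\<lambda>p. \<tau> ^ (length (a # b # r) - length p) * SE x p m) (merges (a # b # r)))"
    by (simp only: merges.simps map_append sum_list_append s1 s2)
  finally show ?case .
qed

lemma QQ_merges:
  "QQ x \<tau> ks m = sum_list (map (\<lambda>p. \<tau> ^ (length ks - length p) * SQ x p m) (merges ks))"
proof (cases "ks = []")
  case True then show ?thesis by (simp add: QQ_Nil SQ_Nil)
next
  case False then show ?thesis by (rule QQ_from_EE) (rule EE_merges)
qed

definition AN :: "nat \<Rightarrow> nat list \<Rightarrow> nat list set" where
  "AN N p = {ms. length ms = length p \<and> sorted_wrt (>) ms \<and> (\<forall>m\<in>set ms. 0 < m \<and> m \<le> N)}"

definition Ainf :: "nat list \<Rightarrow> nat list set" where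
  "Ainf p = {ms. length ms = length p \<and> sorted_wrt (>) ms \<and> (\<forall>m\<in>set ms. m > 0)}"

lemma finite_AN: "finite (AN N p)"
proof (rule finite_subset)
  show "AN N p \<subseteq> {ms. set ms \<subseteq> {0..N} \<and> length ms = length p}" by (auto simp: AN_def)
  show "finite {ms. set ms \<subseteq> {0..N} \<and> length ms = length p}" by (rule finite_lists_length_eq) simp
qed

lemma AN_Nil: "AN N [] = {[]}" by (auto simp: AN_def)

lemma AN_Cons_bij:
  "bij_betw (\<lambda>(j, ms). j # ms) (Sigma {1..N} (\<lambda>j. AN (j - 1) p)) (AN N (a # p))"
proof (rule bij_betwI')
  show "\<And>x y. x \<in> Sigma {1..N} (\<lambda>j. AN (j - 1) p) \<Longrightarrow> y \<in> Sigma {1..N} (\<lambda>j. AN (j - 1) p) \<Longrightarrow>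
      ((case x of (j, ms) \<Rightarrow> j # ms) = (case y of (j, ms) \<Rightarrow> j # ms)) = (x = y)"
    by auto
  show "(case z of (j, ms) \<Rightarrow> j # ms) \<in> AN N (a # p)" if z: "z \<in> Sigma {1..N} (\<lambda>j. AN (j - 1) p)" for z
  proof -
    obtain j ms where zz: "z = (j, ms)" "1 \<le> j" "j \<le> N" "ms \<in> AN (j - 1) p" using z by auto
    have h: "length ms = length p" "sorted_wrt (>) ms" "\<forall>m\<in>set ms. 0 < m \<and> m \<le> j - 1"
      using zz(4) by (auto simp: AN_def)
    have lt: "\<forall>m\<in>set ms. 0 < m \<and> m < j \<and> m \<le> N"
    proof
      fix m assume "m \<in> set ms"
      then have "0 < m" "m \<le> j - 1" using h(3) by auto
      then show "0 < m \<and> m < j \<and> m \<le> N" using zz(2,3) by linarith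
    qed
    show ?thesis using zz h lt by (auto simp: AN_def)
  qed
  show "\<exists>x\<in>Sigma {1..N} (\<lambda>j. AN (j - 1) p). y = (case x of (j, ms) \<Rightarrow> j # ms)" if hy: "y \<in> AN N (a # p)" for y
  proof -
    obtain j ms where y: "y = j # ms" using hy by (cases y) (auto simp: AN_def)
    have "j \<in> {1..N}" "ms \<in> AN (j - 1) p" using hy y by (auto simp: AN_def)
    then show ?thesis using y by auto
  qed
qed

lemma SQ_fin: "SQ x p N = (\<Sum>ms\<in>AN N p. \<Prod>j<length p. x (ms ! j) ^ (p ! j))"
proof (induction p arbitrary: N)
  case Nil then show ?case by (simp add: SQ_Nil AN_Nil)
next
  case (Cons a p)
  have "SQ x (a # p) N = (\<Sum>j\<in>{1..N}. x j ^ a * SQ x p (j - 1))"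
    by (simp add: SQ_def SE_Cons)
  also have "\<dots> = (\<Sum>j\<in>{1..N}. \<Sum>ms\<in>AN (j - 1) p. x j ^ a * (\<Prod>i<length p. x (ms ! i) ^ (p ! i)))"
    by (simp add: Cons sum_distrib_left)
  also have "\<dots> = (\<Sum>(j, ms)\<in>Sigma {1..N} (\<lambda>j. AN (j - 1) p). x j ^ a * (\<Prod>i<length p. x (ms ! i) ^ (p ! i)))"
    by (rule sum.Sigma) (auto simp: finite_AN)
  also have "\<dots> = (\<Sum>(j, ms)\<in>Sigma {1..N} (\<lambda>j. AN (j - 1) p). (\<lambda>ms'. \<Prod>i<length (a # p). x (ms' ! i) ^ ((a # p) ! i)) (j # ms))"
    by (rule sum.cong[OF refl]) (auto simp del: prod.lessThan_Suc simp add: prod.lessThan_Suc_shift)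
  also have "\<dots> = (\<Sum>ms'\<in>AN N (a # p). \<Prod>i<length (a # p). x (ms' ! i) ^ ((a # p) ! i))"
    using sum.reindex_bij_betw[OF AN_Cons_bij[of N p a], of "\<lambda>ms'. \<Prod>i<length (a # p). x (ms' ! i) ^ ((a # p) ! i)"]
    by (simp add: case_prod_unfold)
  finally show ?case .
qed

definition xr :: "nat \<Rightarrow> real" where "xr m = 1 / real m"

lemma xr_nonneg: "0 \<le> xr m" by (simp add: xr_def)

lemma SQ_nonneg: "0 \<le> SQ xr p N"
  unfolding SQ_fin by (intro sum_nonneg prod_nonneg zero_le_power xr_nonneg)

lemma sum_inv_sq: "(\<Sum>j\<in>{1..N}. (1 / real j) ^ 2) \<le> 2 - 1 / real N \<or> N = 0"
proof (induction N)
  case 0 then show ?case by simp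
next
  case (Suc N)
  show ?case
  proof (cases "N = 0")
    case True then show ?thesis by simp
  next
    case False
    with Suc have ih: "(\<Sum>j\<in>{1..N}. (1 / real j) ^ 2) \<le> 2 - 1 / real N" by simp
    have N: "0 < real N" using False by simp
    have e: "1 / real N - 1 / real (Suc N) = 1 / (real N * (real N + 1))" using N by (simp add: field_simps)
    have e2: "(1 / real (Suc N)) ^ 2 = 1 / ((real N + 1) * (real N + 1))" by (simp add: power2_eq_square algebra_simps)
    have "1 / ((real N + 1) * (real N + 1)) \<le> 1 / (real N * (real N + 1))"
      using N by (intro divide_left_mono mult_right_mono) auto
    then have "(1 / real (Suc N)) ^ 2 \<le> 1 / real N - 1 / real (Suc N)" by (simp only: e e2)
    then show ?thesis using ih by simp
  qed
qed

lemma sum_inv_pow_le: "2 \<le> a \<Longrightarrow> (\<Sum>j\<in>{1..N}. xr j ^ a) \<le> 2"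
proof -
  assume a: "2 \<le> a"
  have "(\<Sum>j\<in>{1..N}. xr j ^ a) \<le> (\<Sum>j\<in>{1..N}. (1 / real j) ^ 2)"
  proof (rule sum_mono)
    fix j assume "j \<in> {1..N}"
    then show "xr j ^ a \<le> (1 / real j) ^ 2" unfolding xr_def
      by (intro power_decreasing a) auto
  qed
  also have "\<dots> \<le> 2"
  proof (cases "N = 0")
    case True then show ?thesis by simp
  next
    case False
    then have "(\<Sum>j\<in>{1..N}. (1 / real j) ^ 2) \<le> 2 - 1 / real N" using sum_inv_sq[of N] by auto
    moreover have "0 \<le> 1 / real N" by simp
    ultimately show ?thesis by linarith
  qed
  finally show ?thesis .
qed

lemma SQ_bound: "(\<forall>a\<in>set p. 2 \<le> a) \<Longrightarrow> SQ xr p N \<le> 2 ^ length p"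
proof (induction p arbitrary: N)
  case Nil then show ?case by (simp add: SQ_Nil)
next
  case (Cons a p)
  have "SQ xr (a # p) N = (\<Sum>j\<in>{1..N}. xr j ^ a * SQ xr p (j - 1))"
    by (simp add: SQ_def SE_Cons)
  also have "\<dots> \<le> (\<Sum>j\<in>{1..N}. xr j ^ a * 2 ^ length p)"
    using Cons by (intro sum_mono mult_left_mono zero_le_power xr_nonneg) auto
  also have "\<dots> = (\<Sum>j\<in>{1..N}. xr j ^ a) * 2 ^ length p" by (simp add: sum_distrib_right)
  also have "\<dots> \<le> 2 * 2 ^ length p"
    using sum_inv_pow_le[of a N] Cons.prems by (intro mult_right_mono) auto
  finally show ?case by simp
qed

lemma fin_exhaust_tendsto:
  fixes f :: "'a \<Rightarrow> real"
  assumes nonneg: "\<And>x. x \<in> A \<Longrightarrow> 0 \<le> f x" and summ: "f summable_on A"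
    and fin: "\<And>N. finite (S N)" and sub: "\<And>N. S N \<subseteq> A" and mono: "\<And>N M. N \<le> M \<Longrightarrow> S N \<subseteq> S M"
    and cover: "\<And>F. finite F \<Longrightarrow> F \<subseteq> A \<Longrightarrow> \<exists>N. F \<subseteq> S N"
  shows "(\<lambda>N. sum f (S N)) \<longlonglongrightarrow> infsum f A"
proof (rule LIMSEQ_I)
  fix r :: real assume r: "0 < r"
  obtain F where F: "finite F" "F \<subseteq> A" "dist (sum f F) (infsum f A) \<le> r / 2"
    using infsum_finite_approximation[OF summ, of "r / 2"] r by auto
  obtain N0 where N0: "F \<subseteq> S N0" using cover[OF F(1,2)] by blast
  show "\<exists>no. \<forall>n\<ge>no. norm (sum f (S n) - infsum f A) < r"
  proof (intro exI allI impI)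
    fix n assume n: "N0 \<le> n"
    have "sum f F \<le> sum f (S n)"
      by (rule sum_mono2[OF fin]) (use N0 mono[OF n] sub[of n] nonneg in blast)+
    moreover have "sum f (S n) \<le> infsum f A"
      by (rule finite_sum_le_infsum[OF summ fin sub]) (use nonneg in auto)
    ultimately show "norm (sum f (S n) - infsum f A) < r"
      using F(3) r by (auto simp: dist_real_def)
  qed
qed

lemma AN_sub: "AN N p \<subseteq> Ainf p" by (auto simp: AN_def Ainf_def)
lemma AN_mono: "N \<le> M \<Longrightarrow> AN N p \<subseteq> AN M p" by (auto simp: AN_def)
lemma AN_cover:
  assumes "finite F" "F \<subseteq> Ainf p"
  shows "\<exists>N. F \<subseteq> AN N p"
proof -
  let ?N = "Max (insert 0 (\<Union>ms\<in>F. set ms))"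
  have fin: "finite (insert 0 (\<Union>ms\<in>F. set ms))" using assms(1) by simp
  have "F \<subseteq> AN ?N p"
  proof
    fix ms assume ms: "ms \<in> F"
    have "m \<le> ?N" if "m \<in> set ms" for m using that ms fin by (intro Max_ge) auto
    then show "ms \<in> AN ?N p" using ms assms(2) by (auto simp: AN_def Ainf_def)
  qed
  then show ?thesis by blast
qed

definition fr :: "nat list \<Rightarrow> nat list \<Rightarrow> real" where
  "fr p ms = (\<Prod>j<length p. xr (ms ! j) ^ (p ! j))"

lemma mzv_fr: "mzv p = infsum (fr p) (Ainf p)"
proof -
  have "(\<lambda>ms. \<Prod>j<length p. 1 / real (ms ! j) ^ (p ! j)) = fr p"
    by (simp add: fun_eq_iff fr_def xr_def power_one_over)
  then show ?thesis by (simp add: mzv_def Ainf_def)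
qed

lemma SQ_lim:
  assumes "\<forall>a\<in>set p. 2 \<le> a"
  shows "(\<lambda>N. SQ xr p N) \<longlonglongrightarrow> mzv p"
proof -
  have nonneg: "\<And>ms. 0 \<le> fr p ms" unfolding fr_def by (intro prod_nonneg zero_le_power xr_nonneg)
  have SQe: "SQ xr p N = sum (fr p) (AN N p)" for N by (simp add: SQ_fin fr_def)
  have summ: "fr p summable_on Ainf p"
  proof (rule nonneg_bdd_above_summable_on)
    show "0 \<le> fr p ms" for ms by (rule nonneg)
    show "bdd_above (sum (fr p) ` {F. F \<subseteq> Ainf p \<and> finite F})"
    proof (rule bdd_aboveI)
      fix s assume "s \<in> sum (fr p) ` {F. F \<subseteq> Ainf p \<and> finite F}"
      then obtain F where F: "F \<subseteq> Ainf p" "finite F" "s = sum (fr p) F" by auto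
      obtain N where N: "F \<subseteq> AN N p" using AN_cover[OF F(2,1)] by blast
      have "s \<le> sum (fr p) (AN N p)" unfolding F(3) by (rule sum_mono2[OF finite_AN N]) (simp add: nonneg)
      also have "\<dots> \<le> 2 ^ length p" using SQ_bound[OF assms, of N] SQe by simp
      finally show "s \<le> 2 ^ length p" .
    qed
  qed
  show ?thesis unfolding SQe mzv_fr
    by (rule fin_exhaust_tendsto[OF nonneg summ finite_AN AN_sub AN_mono AN_cover])
qed

lemma tendsto_sum_list:
  fixes f :: "'a \<Rightarrow> nat \<Rightarrow> real"
  shows "(\<And>p. p \<in> set xs \<Longrightarrow> (\<lambda>N. f p N) \<longlonglongrightarrow> l p) \<Longrightarrow>
   (\<lambda>N. sum_list (map (\<lambda>p. f p N) xs)) \<longlonglongrightarrow> sum_list (map l xs)"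
proof (induction xs)
  case (Cons a xs)
  have "(\<lambda>N. f a N) \<longlonglongrightarrow> l a" using Cons.prems by simp
  moreover have "(\<lambda>N. sum_list (map (\<lambda>p. f p N) xs)) \<longlonglongrightarrow> sum_list (map l xs)" using Cons by simp
  ultimately have "(\<lambda>N. f a N + sum_list (map (\<lambda>p. f p N) xs)) \<longlonglongrightarrow> l a + sum_list (map l xs)"
    by (rule tendsto_add)
  then show ?case by simp
qed simp

lemma QQ_lim:
  assumes "\<forall>a\<in>set ks. 2 \<le> a"
  shows "(\<lambda>N. QQ xr t ks N) \<longlonglongrightarrow> zeta_t ks t"
  unfolding QQ_merges zeta_t_def
  by (rule tendsto_sum_list, rule tendsto_mult_left, rule SQ_lim) (use merges_ge[OF assms] in auto)

lemma SQ_single: "SQ x [c] N = (\<Sum>m\<in>{1..N}. x m ^ c)"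
  by (simp add: SQ_def SE_Cons SQ_Nil)

lemma mzv_Nil: "mzv [] = 1"
proof -
  have "(\<lambda>N. SQ xr [] N) \<longlonglongrightarrow> mzv []" by (rule SQ_lim) simp
  moreover have "(\<lambda>N. SQ xr [] N) \<longlonglongrightarrow> 1" by (simp add: SQ_Nil)
  ultimately show ?thesis using LIMSEQ_unique by blast
qed

lemma zeta_t_Nil: "zeta_t [] t = 1"
  by (simp add: zeta_t_def mzv_Nil)

theorem part2:
  fixes k :: nat and t :: real
  assumes k: "2 \<le> k"
  shows "Abs_fps (\<lambda>n. if n = 0 then 1 else zeta_t (replicate n k) t)
       = fps_exp 1 oo Abs_fps (\<lambda>n. if n = 0 then 0
              else (t ^ n - (t - 1) ^ n) * mzv [n * k] / real n)"
proof -
  define Z where "Z n = zeta_t (replicate n k) t" for n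
  define H where "H = Abs_fps (\<lambda>j. (t ^ Suc j - (t - 1) ^ Suc j) * mzv [Suc j * k])"
  define A where "A = Abs_fps (\<lambda>n. if n = 0 then 1 else zeta_t (replicate n k) t)"
  define B where "B = Abs_fps (\<lambda>n. if n = 0 then 0 else (t ^ n - (t - 1) ^ n) * mzv [n * k] / real n)"
  have Z0: "Z 0 = 1" by (simp add: Z_def zeta_t_Nil)
  have An: "fps_nth A n = Z n" for n using Z0 by (simp add: A_def Z_def)
  have Zlim: "(\<lambda>N. QQ xr t (replicate i k) N) \<longlonglongrightarrow> Z i" for i
    unfolding Z_def by (rule QQ_lim) (use k in auto)
  have Plim: "(\<lambda>N. \<Sum>m\<in>{1..N}. xr m ^ (k * Suc j)) \<longlonglongrightarrow> mzv [Suc j * k]" for j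
  proof -
    have "(\<lambda>N. SQ xr [k * Suc j] N) \<longlonglongrightarrow> mzv [k * Suc j]" by (rule SQ_lim) (use k in auto)
    then show ?thesis by (simp add: SQ_single mult.commute)
  qed
  have rec: "of_nat (Suc n) * Z (Suc n) = (\<Sum>i=0..n. Z i * fps_nth H (n - i))" for n
  proof -
    have eq: "of_nat (Suc n) * QQ xr t (replicate (Suc n) k) N
        = (\<Sum>i=0..n. QQ xr t (replicate i k) N * ((t ^ Suc (n - i) - (t - 1) ^ Suc (n - i))
             * (\<Sum>m\<in>{1..N}. xr m ^ (k * Suc (n - i)))))" for N
      using arg_cong[OF Gf_ode[of xr t k N], of "\<lambda>P. fps_nth P n"]
      by (simp add: Gf_def HH_def fps_mult_nth del: of_nat_Suc)
    have l1: "(\<lambda>N. of_nat (Suc n) * QQ xr t (replicate (Suc n) k) N) \<longlonglongrightarrow> of_nat (Suc n) * Z (Suc n)"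
      by (intro tendsto_mult tendsto_const Zlim)
    have l2: "(\<lambda>N. \<Sum>i=0..n. QQ xr t (replicate i k) N * ((t ^ Suc (n - i) - (t - 1) ^ Suc (n - i))
             * (\<Sum>m\<in>{1..N}. xr m ^ (k * Suc (n - i)))))
        \<longlonglongrightarrow> (\<Sum>i=0..n. Z i * ((t ^ Suc (n - i) - (t - 1) ^ Suc (n - i)) * mzv [Suc (n - i) * k]))"
      by (intro tendsto_sum tendsto_mult tendsto_const Zlim Plim)
    have "of_nat (Suc n) * Z (Suc n) = (\<Sum>i=0..n. Z i * ((t ^ Suc (n - i) - (t - 1) ^ Suc (n - i)) * mzv [Suc (n - i) * k]))"
      using LIMSEQ_unique[OF l1 l2[folded eq]] .
    then show ?thesis by (simp add: H_def del: of_nat_Suc)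
  qed
  have dA: "fps_deriv A = A * H"
  proof (rule fps_ext)
    fix n
    show "fps_nth (fps_deriv A) n = fps_nth (A * H) n"
      using rec[of n] by (simp add: An fps_mult_nth del: of_nat_Suc)
  qed
  have B0: "fps_nth B 0 = 0" by (simp add: B_def)
  have dB: "fps_deriv B = H"
  proof (rule fps_ext)
    fix j
    show "fps_nth (fps_deriv B) j = fps_nth H j"
      by (simp add: B_def H_def del: of_nat_Suc)
  qed
  have dE: "fps_deriv (fps_exp 1 oo B) = (fps_exp 1 oo B) * H"
    using fps_compose_deriv[OF B0, of "fps_exp (1::real)"] dB by simp
  have "A = fps_exp 1 oo B"
  proof (rule ode_unique[OF _ dA dE])
    show "of_nat (Suc n) * a = 0 \<Longrightarrow> a = 0" for n and a :: real by simp
    show "fps_nth A 0 = fps_nth (fps_exp 1 oo B) 0" by (simp add: A_def)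
  qed
  then show ?thesis by (simp add: A_def B_def)
qed

theorem corollary4p2:
  shows "(\<forall>k::nat. k \<ge> 1 \<longrightarrow> geomser k = texp (logser k))
    \<and> (\<forall>k::nat. k \<ge> 2 \<longrightarrow> (\<forall>t::real.
         Abs_fps (\<lambda>n. if n = 0 then 1 else zeta_t (replicate n k) t)
       = fps_exp 1 oo Abs_fps (\<lambda>n. if n = 0 then 0
              else (t ^ n - (t - 1) ^ n) * mzv [n * k] / real n)))"
proof (intro conjI allI impI)
  fix k :: nat
  assume "k \<ge> 1"
  then show "geomser k = texp (logser k)" by (rule part1)
next
  fix k :: nat and t :: real
  assume "k \<ge> 2"
  then show "Abs_fps (\<lambda>n. if n = 0 then 1 else zeta_t (replicate n k) t)
       = fps_exp 1 oo Abs_fps (\<lambda>n. if n = 0 then 0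
              else (t ^ n - (t - 1) ^ n) * mzv [n * k] / real n)" by (rule part2)
qed

end
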